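(* Let $(\mathcal{T},\mathcal{F},\mathcal{S})$ be a tree of fusion systems satisfying $(H)$, with completion $\mathcal{F}_\mathcal{T}$ on $S:=\mathcal{S}(v_* )$, and fix $P\le S$. Then: (a) The connected component of the vertex $[\iota_P^S]_{\mathcal{F}(v_* )}$ in the $P$-orbit graph $\operatorname{Rep}(P,\mathcal{F})$ is equal to (isomorphic to) the subgraph $\operatorname{Rep}_{\mathcal{F}_\mathcal{T}}(P,\mathcal{F})$. (b) The map $\Phi_P:\pi_0(\operatorname{Rep}(P,\mathcal{F}))\to\operatorname{Rep}(P,\mathcal{F}_\mathcal{T})$ sending the connected component of a vertex $[\alpha]_{\mathcal{F}(v)}$ to $[\alpha\circ\iota_{\mathcal{S}(v)}^S]_{\mathcal{F}_\mathcal{T}}$ is a well-defined bijection.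
   Context: Conventions: homomorphisms act on the right, $\alpha\circ\beta$ means first $\alpha$ then $\beta$, $\iota$ denotes inclusions. Fusion systems, morphisms of fusion systems, trees of fusion systems $(\mathcal{T},\mathcal{F},\mathcal{S})$ (finite tree $\mathcal{T}$; finite $p$-groups $\mathcal{S}(v),\mathcal{S}(e)$ with monomorphisms $\mathcal{S}(f_{ev}):\mathcal{S}(e)\to\mathcal{S}(v)$ for $v$ incident on $e$; fusion systems $\mathcal{F}(v)$ on $\mathcal{S}(v)$, $\mathcal{F}(e)$ on $\mathcal{S}(e)$ with $\mathcal{S}(f_{ev})$ an injective morphism of fusion systems) are as usual. Hypothesis $(H)$: there is a vertex $v_*$ such that for every vertex $v\neq v_*$, the edge $e$ incident on $v$ on the minimal path from $v$ to $v_*$ has $\mathcal{S}(f_{ev})$ an isomorphism. Under $(H)$ all $\mathcal{S}(v),\mathcal{S}(e)$ are identified with subgroups of $S=\mathcal{S}(v_* )$ so that the $\mathcal{S}(f_{ev})$ are inclusions, and the completion is $\mathcal{F}_\mathcal{T}:=\langle\operatorname{Hom}_{\mathcal{F}(v)}(Q,\mathcal{S}(v))\mid Q\le\mathcal{S}(v), v\in V(\mathcal{T})\rangle_S$, the smallest fusion system on $S$ containing all $\mathcal{F}(v)$. For a fusion system $\mathcal{K}$ on $T$ and a $p$-group $P$, define $\alpha\sim\beta$ on $\operatorname{Hom}(P,T)$ iff there is $\gamma\in\operatorname{Iso}_\mathcal{K}(P\alpha,P\beta)$ with $\alpha\circ\gamma=\beta$; $\operatorname{Rep}(P,\mathcal{K}):=\operatorname{Hom}(P,T)/\!\sim$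 with classes $[\alpha]_\mathcal{K}$; if $\hat{\mathcal{K}}\supseteq\mathcal{K}$ is a fusion system, $\operatorname{Rep}_{\hat{\mathcal{K}}}(P,\mathcal{K}):=\operatorname{Hom}_{\hat{\mathcal{K}}}(P,T)/\!\sim$. The $P$-orbit graph $\operatorname{Rep}(P,\mathcal{F})$ has vertex set the disjoint union over $v\in V(\mathcal{T})$ of $\operatorname{Rep}(P,\mathcal{F}(v))$ and edge set the disjoint union over $e\in E(\mathcal{T})$ of $\operatorname{Rep}(P,\mathcal{F}(e))$; an edge $[\gamma]_{\mathcal{F}(e)}$ with $e=(v,w)$ joins $[\gamma\circ\iota_{\mathcal{S}(e)}^{\mathcal{S}(v)}]_{\mathcal{F}(v)}$ and $[\gamma\circ\iota_{\mathcal{S}(e)}^{\mathcal{S}(w)}]_{\mathcal{F}(w)}$. For $P\le S$ under $(H)$, $\operatorname{Rep}_{\mathcal{F}_\mathcal{T}}(P,\mathcal{F})$ is the subgraph with vertices $\operatorname{Rep}_{\mathcal{F}_\mathcal{T}}(P,\mathcal{F}(v))$ and edges $\operatorname{Rep}_{\mathcal{F}_\mathcal{T}}(P,\mathcal{F}(e))$ (classes of morphisms lying in $\mathcal{F}_\mathcal{T}$). *)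

theory Defs
  imports "HOL-Algebra.Algebra" "HOL-Computational_Algebra.Primes"
begin

text \<open>All groups are subgroups of one ambient group G (the identification
provided by hypothesis (H)). Homomorphisms are extensional functions
(undefined outside their domain); composition "first alpha then gamma" is
compose Q gamma alpha.\<close>

definition p_group :: "('a,'b) monoid_scheme \<Rightarrow> nat \<Rightarrow> 'a set \<Rightarrow> bool" where
  "p_group G p S \<longleftrightarrow> Factorial_Ring.prime p \<and> subgroup S G \<and> finite S \<and> (\<exists>n. card S = p ^ n)"

definition sub_hom :: "('a,'b) monoid_scheme \<Rightarrow> 'a set \<Rightarrow> 'a set \<Rightarrow> ('a \<Rightarrow> 'a) set" where
  "sub_hom G Q R = {\<phi>. \<phi> \<in> Q \<rightarrow>\<^sub>E R \<and>
      (\<forall>x\<in>Q. \<forall>y\<in>Q. \<phi> (x \<otimes>\<^bsub>G\<^esub> y) = \<phi> x \<otimes>\<^bsub>G\<^esub> \<phi> y)}"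

definition conjmap :: "('a,'b) monoid_scheme \<Rightarrow> 'a \<Rightarrow> 'a set \<Rightarrow> ('a \<Rightarrow> 'a)" where
  "conjmap G g Q = restrict (\<lambda>x. inv\<^bsub>G\<^esub> g \<otimes>\<^bsub>G\<^esub> x \<otimes>\<^bsub>G\<^esub> g) Q"

definition Hom_S :: "('a,'b) monoid_scheme \<Rightarrow> 'a set \<Rightarrow> 'a set \<Rightarrow> 'a set \<Rightarrow> ('a \<Rightarrow> 'a) set" where
  "Hom_S G S Q R = {conjmap G g Q | g. g \<in> S \<and> conjmap G g Q ` Q \<subseteq> R}"

text \<open>A fusion system F on S: F Q R is the set Hom_F(Q,R).\<close>
definition fusion_system ::
  "('a,'b) monoid_scheme \<Rightarrow> nat \<Rightarrow> 'a set \<Rightarrow> ('a set \<Rightarrow> 'a set \<Rightarrow> ('a \<Rightarrow> 'a) set) \<Rightarrow> bool" where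
  "fusion_system G p S F \<longleftrightarrow>
     p_group G p S \<and>
     (\<forall>Q R. F Q R \<noteq> {} \<longrightarrow> subgroup Q G \<and> Q \<subseteq> S \<and> subgroup R G \<and> R \<subseteq> S) \<and>
     (\<forall>Q R. subgroup Q G \<and> Q \<subseteq> S \<and> subgroup R G \<and> R \<subseteq> S \<longrightarrow>
        Hom_S G S Q R \<subseteq> F Q R \<and> F Q R \<subseteq> {\<phi> \<in> sub_hom G Q R. inj_on \<phi> Q}) \<and>
     (\<forall>Q R \<phi>. \<phi> \<in> F Q R \<longrightarrow>
        \<phi> \<in> F Q (\<phi> ` Q) \<and> restrict (inv_into Q \<phi>) (\<phi> ` Q) \<in> F (\<phi> ` Q) Q) \<and>
     (\<forall>Q R T \<phi> \<psi>. \<phi> \<in> F Q R \<longrightarrow> \<psi> \<in> F R T \<longrightarrow> compose Q \<psi> \<phi> \<in> F Q T)"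

definition completion ::
  "('a,'b) monoid_scheme \<Rightarrow> nat \<Rightarrow> 'a set \<Rightarrow> 'v set \<Rightarrow> ('v \<Rightarrow> 'a set)
   \<Rightarrow> ('v \<Rightarrow> 'a set \<Rightarrow> 'a set \<Rightarrow> ('a \<Rightarrow> 'a) set) \<Rightarrow> 'a set \<Rightarrow> 'a set \<Rightarrow> ('a \<Rightarrow> 'a) set" where
  "completion G p S V SV FV = (\<lambda>Q R. \<Inter> {F' Q R | F'. fusion_system G p S F' \<and>
      (\<forall>v\<in>V. \<forall>Q'. FV v Q' (SV v) \<subseteq> F' Q' (SV v))})"

text \<open>Finite trees: vertex set V, each edge stored once as an ordered pair.\<close>
definition undir :: "('v \<times> 'v) set \<Rightarrow> ('v \<times> 'v) set" where
  "undir E = E \<union> E\<inverse>"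

definition fin_tree :: "'v set \<Rightarrow> ('v \<times> 'v) set \<Rightarrow> bool" where
  "fin_tree V E \<longleftrightarrow> finite V \<and> V \<noteq> {} \<and> E \<subseteq> V \<times> V \<and> (\<forall>v. (v,v) \<notin> E) \<and>
     (\<forall>v w. (v,w) \<in> E \<longrightarrow> (w,v) \<notin> E) \<and>
     (\<forall>v\<in>V. \<forall>w\<in>V. (v,w) \<in> (undir E)\<^sup>*) \<and> card E + 1 = card V"

definition tree_dist :: "('v \<times> 'v) set \<Rightarrow> 'v \<Rightarrow> 'v \<Rightarrow> nat" where
  "tree_dist E u w = (LEAST n. (u,w) \<in> (undir E) ^^ n)"

text \<open>Hypothesis (H), after identification: for v \<noteq> v*, the edge at v on the
minimal path to v* (the edge at v whose other end is closer to v*) has S(e) = S(v).\<close>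
definition hyp_H :: "'v set \<Rightarrow> ('v \<times> 'v) set \<Rightarrow> ('v \<Rightarrow> 'a set) \<Rightarrow> ('v \<times> 'v \<Rightarrow> 'a set) \<Rightarrow> 'v \<Rightarrow> bool" where
  "hyp_H V E SV SE vs \<longleftrightarrow> vs \<in> V \<and>
     (\<forall>v\<in>V. v \<noteq> vs \<longrightarrow> (\<forall>e\<in>E. \<forall>w. (e = (v,w) \<or> e = (w,v)) \<and>
        tree_dist E w vs < tree_dist E v vs \<longrightarrow> SE e = SV v))"

definition iso_in :: "('a set \<Rightarrow> 'a set \<Rightarrow> ('a \<Rightarrow> 'a) set) \<Rightarrow> 'a set \<Rightarrow> 'a set \<Rightarrow> ('a \<Rightarrow> 'a) set" where
  "iso_in K A B = {\<gamma> \<in> K A B. bij_betw \<gamma> A B}"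

definition rep_rel :: "('a,'b) monoid_scheme \<Rightarrow> ('a set \<Rightarrow> 'a set \<Rightarrow> ('a \<Rightarrow> 'a) set)
    \<Rightarrow> 'a set \<Rightarrow> 'a set \<Rightarrow> (('a \<Rightarrow> 'a) \<times> ('a \<Rightarrow> 'a)) set" where
  "rep_rel G K P T = {(\<alpha>,\<beta>). \<alpha> \<in> sub_hom G P T \<and> \<beta> \<in> sub_hom G P T \<and>
      (\<exists>\<gamma> \<in> iso_in K (\<alpha> ` P) (\<beta> ` P). compose P \<gamma> \<alpha> = \<beta>)}"

definition Rep :: "('a,'b) monoid_scheme \<Rightarrow> ('a set \<Rightarrow> 'a set \<Rightarrow> ('a \<Rightarrow> 'a) set)
    \<Rightarrow> 'a set \<Rightarrow> 'a set \<Rightarrow> ('a \<Rightarrow> 'a) set set" where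
  "Rep G K P T = sub_hom G P T // rep_rel G K P T"

definition Rep_in :: "('a,'b) monoid_scheme \<Rightarrow> ('a set \<Rightarrow> 'a set \<Rightarrow> ('a \<Rightarrow> 'a) set)
    \<Rightarrow> ('a set \<Rightarrow> 'a set \<Rightarrow> ('a \<Rightarrow> 'a) set) \<Rightarrow> 'a set \<Rightarrow> 'a set \<Rightarrow> ('a \<Rightarrow> 'a) set set" where
  "Rep_in G Khat K P T = Khat P T // rep_rel G K P T"

definition rep_cls :: "('a,'b) monoid_scheme \<Rightarrow> ('a set \<Rightarrow> 'a set \<Rightarrow> ('a \<Rightarrow> 'a) set)
    \<Rightarrow> 'a set \<Rightarrow> 'a set \<Rightarrow> ('a \<Rightarrow> 'a) \<Rightarrow> ('a \<Rightarrow> 'a) set" where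
  "rep_cls G K P T \<alpha> = rep_rel G K P T `` {\<alpha>}"

definition orbit_vertices where
  "orbit_vertices G V SV FV P = {(v,c). v \<in> V \<and> c \<in> Rep G (FV v) P (SV v)}"

definition orbit_edges where
  "orbit_edges G E SE FE P = {(e,c). e \<in> E \<and> c \<in> Rep G (FE e) P (SE e)}"

definition orbit_incident where
  "orbit_incident G SV FV P x \<epsilon> \<longleftrightarrow> (\<exists>v w c \<gamma>. \<epsilon> = ((v,w),c) \<and> \<gamma> \<in> c \<and>
      (x = (v, rep_cls G (FV v) P (SV v) \<gamma>) \<or> x = (w, rep_cls G (FV w) P (SV w) \<gamma>)))"

definition orbit_adj where
  "orbit_adj G E SV SE FV FE P = {(x,y). \<exists>v w c \<gamma>. ((v,w),c) \<in> orbit_edges G E SE FE P \<and>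
      \<gamma> \<in> c \<and> x = (v, rep_cls G (FV v) P (SV v) \<gamma>) \<and> y = (w, rep_cls G (FV w) P (SV w) \<gamma>)}"

definition orbit_conn where
  "orbit_conn G E SV SE FV FE P = (undir (orbit_adj G E SV SE FV FE P))\<^sup>*"

end

theory Submission
  imports Defs
begin

lemma sub_hom_mono: "R \<subseteq> R' \<Longrightarrow> sub_hom G Q R \<subseteq> sub_hom G Q R'"
  unfolding sub_hom_def by (auto simp: PiE_def Pi_def)

lemma sub_hom_D:
  assumes "\<alpha> \<in> sub_hom G Q R"
  shows "\<alpha> \<in> Q \<rightarrow>\<^sub>E R" "\<And>x. x \<in> Q \<Longrightarrow> \<alpha> x \<in> R" "\<And>x. x \<notin> Q \<Longrightarrow> \<alpha> x = undefined"
    "\<And>x y. x \<in> Q \<Longrightarrow> y \<in> Q \<Longrightarrow> \<alpha> (x \<otimes>\<^bsub>G\<^esub> y) = \<alpha> x \<otimes>\<^bsub>G\<^esub> \<alpha> y"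
  using assms unfolding sub_hom_def by (auto simp: PiE_def Pi_def extensional_def)

lemma sub_hom_image: "\<alpha> \<in> sub_hom G P Q \<Longrightarrow> \<alpha> \<in> sub_hom G P (\<alpha> ` P)"
  unfolding sub_hom_def by (auto simp: PiE_def Pi_def)

lemma sub_hom_compose:
  assumes "\<alpha> \<in> sub_hom G P Q" "\<phi> \<in> sub_hom G Q R" "subgroup P G"
  shows "compose P \<phi> \<alpha> \<in> sub_hom G P R"
  using assms unfolding sub_hom_def compose_def
  by (auto simp: PiE_def Pi_def extensional_def subgroup.m_closed)

context group begin

lemma hom_one:
  assumes "subgroup P G" "\<alpha> \<in> sub_hom G P Q" "Q \<subseteq> carrier G"
  shows "\<alpha> \<one> = \<one>"
proof -
  have o: "\<one> \<in> P" using assms(1) subgroup.one_closed by blast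
  have a: "\<alpha> \<one> \<in> carrier G" using sub_hom_D(2)[OF assms(2) o] assms(3) by blast
  have "\<alpha> \<one> \<otimes> \<alpha> \<one> = \<alpha> \<one> \<otimes> \<one>"
    using sub_hom_D(4)[OF assms(2) o o] a by simp
  then show ?thesis using l_cancel[OF _ a one_closed a] by blast
qed

lemma hom_inv:
  assumes "subgroup P G" "\<alpha> \<in> sub_hom G P Q" "Q \<subseteq> carrier G" "x \<in> P"
  shows "\<alpha> (inv x) = inv (\<alpha> x)"
proof -
  have ix: "inv x \<in> P" by (rule subgroup.m_inv_closed[OF assms(1) assms(4)])
  have a1: "\<alpha> x \<in> carrier G" using assms(3) sub_hom_D(2)[OF assms(2) assms(4)] by (rule subsetD)
  have a2: "\<alpha> (inv x) \<in> carrier G" using assms(3) sub_hom_D(2)[OF assms(2) ix] by (rule subsetD)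
  have xc: "x \<in> carrier G" using subgroup.subset[OF assms(1)] assms(4) by (rule subsetD)
  have "\<alpha> (x \<otimes> inv x) = \<alpha> x \<otimes> \<alpha> (inv x)" by (rule sub_hom_D(4)[OF assms(2) assms(4) ix])
  moreover have "x \<otimes> inv x = \<one>" using xc by (rule r_inv)
  ultimately have "\<alpha> x \<otimes> \<alpha> (inv x) = \<one>" using hom_one[OF assms(1-3)] by simp
  then have "\<alpha> (inv x) \<otimes> \<alpha> x = \<one>" using a1 a2 by (rule inv_comm)
  then show ?thesis using a1 a2 by (rule inv_equality[THEN sym])
qed

lemma hom_image_subgroup:
  assumes "subgroup P G" "\<alpha> \<in> sub_hom G P Q" "Q \<subseteq> carrier G"
  shows "subgroup (\<alpha> ` P) G"
proof (rule subgroupI)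
  have "\<alpha> ` P \<subseteq> Q" using sub_hom_D(2)[OF assms(2)] by (rule image_subsetI)
  then show "\<alpha> ` P \<subseteq> carrier G" using assms(3) by (rule order_trans)
  have "\<one> \<in> P" by (rule subgroup.one_closed[OF assms(1)])
  then show "\<alpha> ` P \<noteq> {}" by (intro notI) simp
  fix a assume "a \<in> \<alpha> ` P"
  then obtain x where x: "x \<in> P" "a = \<alpha> x" by (rule imageE) simp
  have "inv x \<in> P" by (rule subgroup.m_inv_closed[OF assms(1) x(1)])
  moreover have "\<alpha> (inv x) = inv a" using hom_inv[OF assms x(1)] x(2) by simp
  ultimately show "inv a \<in> \<alpha> ` P" by (metis image_eqI)
next
  fix a b assume "a \<in> \<alpha> ` P" "b \<in> \<alpha> ` P"
  then obtain x y where xy: "x \<in> P" "y \<in> P" "a = \<alpha> x" "b = \<alpha> y" by (meson imageE)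
  have "x \<otimes> y \<in> P" by (rule subgroup.m_closed[OF assms(1) xy(1,2)])
  moreover have "\<alpha> (x \<otimes> y) = a \<otimes> b" using sub_hom_D(4)[OF assms(2) xy(1,2)] xy(3,4) by simp
  ultimately show "a \<otimes> b \<in> \<alpha> ` P" by (metis image_eqI)
qed

lemma conjmap_one:
  assumes "Q \<subseteq> carrier G"
  shows "conjmap G \<one> Q = restrict id Q"
  unfolding conjmap_def
proof (rule restrict_ext)
  fix x assume "x \<in> Q"
  then have "x \<in> carrier G" using assms by blast
  then show "inv \<one> \<otimes> x \<otimes> \<one> = id x" by simp
qed

end


lemma sub_hom_restrict_self: "\<phi> \<in> sub_hom G Q R \<Longrightarrow> restrict \<phi> Q = \<phi>"
  unfolding sub_hom_def by (auto simp: PiE_def extensional_restrict)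

lemma compose_incl:
  assumes "\<alpha> \<in> sub_hom G P Q" "\<alpha>`P \<subseteq> A"
  shows "compose P (restrict id A) \<alpha> = \<alpha>"
proof
  fix x show "compose P (restrict id A) \<alpha> x = \<alpha> x"
    using assms sub_hom_D(3)[OF assms(1), of x] unfolding compose_def by auto
qed

context group begin

lemma fs_parts:
  assumes "fusion_system G p T F"
  shows "p_group G p T"
    "\<And>Q R. F Q R \<noteq> {} \<Longrightarrow> subgroup Q G \<and> Q \<subseteq> T \<and> subgroup R G \<and> R \<subseteq> T"
    "\<And>Q R. subgroup Q G \<Longrightarrow> Q \<subseteq> T \<Longrightarrow> subgroup R G \<Longrightarrow> R \<subseteq> T \<Longrightarrow>
        Hom_S G T Q R \<subseteq> F Q R \<and> F Q R \<subseteq> {\<phi> \<in> sub_hom G Q R. inj_on \<phi> Q}"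
    "\<And>Q R \<phi>. \<phi> \<in> F Q R \<Longrightarrow>
        \<phi> \<in> F Q (\<phi> ` Q) \<and> restrict (inv_into Q \<phi>) (\<phi> ` Q) \<in> F (\<phi> ` Q) Q"
    "\<And>Q R U \<phi> \<psi>. \<phi> \<in> F Q R \<Longrightarrow> \<psi> \<in> F R U \<Longrightarrow> compose Q \<psi> \<phi> \<in> F Q U"
proof -
  note d = assms[unfolded fusion_system_def]
  note d2 = d[THEN conjunct2, THEN conjunct1]
  note d3 = d[THEN conjunct2, THEN conjunct2, THEN conjunct1]
  note d4 = d[THEN conjunct2, THEN conjunct2, THEN conjunct2, THEN conjunct1]
  note d5 = d[THEN conjunct2, THEN conjunct2, THEN conjunct2, THEN conjunct2]
  show "p_group G p T" using d by (rule conjunct1)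
  fix Q R U \<phi> \<psi>
  show "F Q R \<noteq> {} \<Longrightarrow> subgroup Q G \<and> Q \<subseteq> T \<and> subgroup R G \<and> R \<subseteq> T"
    by (rule d2[rule_format])
  show "subgroup Q G \<Longrightarrow> Q \<subseteq> T \<Longrightarrow> subgroup R G \<Longrightarrow> R \<subseteq> T \<Longrightarrow>
        Hom_S G T Q R \<subseteq> F Q R \<and> F Q R \<subseteq> {\<phi> \<in> sub_hom G Q R. inj_on \<phi> Q}"
    by (rule d3[rule_format]) (intro conjI; assumption)
  show "\<phi> \<in> F Q R \<Longrightarrow> \<phi> \<in> F Q (\<phi> ` Q) \<and> restrict (inv_into Q \<phi>) (\<phi> ` Q) \<in> F (\<phi> ` Q) Q"
    by (rule d4[rule_format])
  show "\<phi> \<in> F Q R \<Longrightarrow> \<psi> \<in> F R U \<Longrightarrow> compose Q \<psi> \<phi> \<in> F Q U"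
    by (rule d5[rule_format])
qed

lemma fs_D:
  assumes fs: "fusion_system G p T F" and "\<phi> \<in> F Q R"
  shows "\<phi> \<in> sub_hom G Q R" "inj_on \<phi> Q" "subgroup Q G" "Q \<subseteq> T" "subgroup R G" "R \<subseteq> T"
    "\<phi> \<in> F Q (\<phi>`Q)" "restrict (inv_into Q \<phi>) (\<phi>`Q) \<in> F (\<phi>`Q) Q"
proof -
  have ne: "F Q R \<noteq> {}" using assms(2) by blast
  show sg: "subgroup Q G" "Q \<subseteq> T" "subgroup R G" "R \<subseteq> T" using fs_parts(2)[OF fs ne] by blast+
  have "F Q R \<subseteq> {\<phi> \<in> sub_hom G Q R. inj_on \<phi> Q}" using fs_parts(3)[OF fs sg] by blast
  then show "\<phi> \<in> sub_hom G Q R" "inj_on \<phi> Q" using assms(2) by blast+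
  show "\<phi> \<in> F Q (\<phi>`Q)" "restrict (inv_into Q \<phi>) (\<phi>`Q) \<in> F (\<phi>`Q) Q"
    using fs_parts(4)[OF fs assms(2)] by blast+
qed

lemma fs_comp:
  assumes fs: "fusion_system G p T F" and "\<phi> \<in> F Q R" "\<psi> \<in> F R U"
  shows "compose Q \<psi> \<phi> \<in> F Q U"
  using fs_parts(5)[OF assms] .

lemma fs_T: "fusion_system G p T F \<Longrightarrow> subgroup T G"
  using fs_parts(1) unfolding p_group_def by blast

lemma fs_HomS:
  assumes fs: "fusion_system G p T F" and "subgroup Q G" "Q \<subseteq> T" "subgroup R G" "R \<subseteq> T"
  shows "Hom_S G T Q R \<subseteq> F Q R"
  using fs_parts(3)[OF assms] by blast

lemma fs_incl:
  assumes fs: "fusion_system G p T F" and "subgroup Q G" "Q \<subseteq> R" "subgroup R G" "R \<subseteq> T"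
  shows "restrict id Q \<in> F Q R"
proof -
  have T: "subgroup T G" using fs_T[OF fs] .
  have Qc: "Q \<subseteq> carrier G" using assms(2) subgroup.subset by blast
  have c: "conjmap G \<one> Q ` Q \<subseteq> R" using assms(3) by (simp add: conjmap_one[OF Qc])
  have "conjmap G \<one> Q \<in> Hom_S G T Q R"
    unfolding Hom_S_def using c subgroup.one_closed[OF T] by blast
  then have "conjmap G \<one> Q \<in> F Q R" using fs_HomS[OF fs assms(2) _ assms(4,5)] assms(3,5) by blast
  then show ?thesis by (metis conjmap_one[OF Qc])
qed

lemma fs_codom:
  assumes fs: "fusion_system G p T F" and "\<phi> \<in> F Q R" "\<phi>`Q \<subseteq> R'" "subgroup R' G" "R' \<subseteq> T"
  shows "\<phi> \<in> F Q R'"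
proof -
  have a: "\<phi> \<in> F Q (\<phi>`Q)" by (rule fs_D(7)[OF fs assms(2)])
  have b: "restrict id (\<phi>`Q) \<in> F (\<phi>`Q) R'"
    using fs_incl[OF fs fs_D(5)[OF fs a] assms(3,4,5)] .
  have eq: "compose Q (restrict id (\<phi>`Q)) \<phi> = \<phi>"
    using compose_incl[OF fs_D(1)[OF fs assms(2)]] by blast
  show ?thesis using fs_comp[OF fs a b] by (simp only: eq)
qed

lemma fs_restrict:
  assumes fs: "fusion_system G p T F" and "\<phi> \<in> F Q R" "subgroup A G" "A \<subseteq> Q"
  shows "restrict \<phi> A \<in> F A (\<phi>`A)" "bij_betw (restrict \<phi> A) A (\<phi>`A)"
proof -
  have i: "restrict id A \<in> F A Q" using fs_incl[OF fs assms(3,4) fs_D(3,4)[OF fs assms(2)]] .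
  have eq: "compose A \<phi> (restrict id A) = restrict \<phi> A"
    unfolding compose_def by (rule restrict_ext) simp
  have "restrict \<phi> A \<in> F A R" using fs_comp[OF fs i assms(2)] by (simp only: eq)
  from fs_D(7)[OF fs this] show "restrict \<phi> A \<in> F A (\<phi>`A)" by (metis image_restrict_eq)
  have "inj_on \<phi> A" using fs_D(2)[OF fs assms(2)] assms(4) inj_on_subset by blast
  then show "bij_betw (restrict \<phi> A) A (\<phi>`A)" by (simp add: inj_on_imp_bij_betw)
qed

lemma rep_rel_D:
  assumes "(\<alpha>,\<beta>) \<in> rep_rel G F P T'"
  shows "\<alpha> \<in> sub_hom G P T'" "\<beta> \<in> sub_hom G P T'"
    "\<exists>\<gamma>. \<gamma> \<in> F (\<alpha>`P) (\<beta>`P) \<and> bij_betw \<gamma> (\<alpha>`P) (\<beta>`P) \<and> compose P \<gamma> \<alpha> = \<beta>"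
  using assms unfolding rep_rel_def iso_in_def by auto

lemma rep_relI:
  assumes "\<alpha> \<in> sub_hom G P T'" "\<beta> \<in> sub_hom G P T'"
    "\<gamma> \<in> F (\<alpha>`P) (\<beta>`P)" "bij_betw \<gamma> (\<alpha>`P) (\<beta>`P)" "compose P \<gamma> \<alpha> = \<beta>"
  shows "(\<alpha>,\<beta>) \<in> rep_rel G F P T'"
  using assms unfolding rep_rel_def iso_in_def by auto

lemma rep_refl:
  assumes fs: "fusion_system G p T F" and "\<alpha> \<in> sub_hom G P T'" "subgroup P G" "\<alpha>`P \<subseteq> T"
    "T' \<subseteq> carrier G"
  shows "(\<alpha>,\<alpha>) \<in> rep_rel G F P T'"
proof (rule rep_relI[OF assms(2,2)])
  have sg: "subgroup (\<alpha>`P) G" using hom_image_subgroup[OF assms(3,2,5)] .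
  show "restrict id (\<alpha>`P) \<in> F (\<alpha>`P) (\<alpha>`P)" using fs_incl[OF fs sg _ sg assms(4)] by simp
  show "bij_betw (restrict id (\<alpha>`P)) (\<alpha>`P) (\<alpha>`P)" by (simp add: bij_betw_def)
  show "compose P (restrict id (\<alpha>`P)) \<alpha> = \<alpha>"
    using compose_incl[OF assms(2)] by blast
qed

lemma rep_sym:
  assumes fs: "fusion_system G p T F" and r: "(\<alpha>,\<beta>) \<in> rep_rel G F P T'"
  shows "(\<beta>,\<alpha>) \<in> rep_rel G F P T'"
proof -
  obtain \<gamma> where g: "\<gamma> \<in> F (\<alpha>`P) (\<beta>`P)" "bij_betw \<gamma> (\<alpha>`P) (\<beta>`P)" "compose P \<gamma> \<alpha> = \<beta>"
    using rep_rel_D(3)[OF r] by blast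
  have im: "\<gamma>`(\<alpha>`P) = \<beta>`P" using bij_betw_imp_surj_on[OF g(2)] .
  have inj: "inj_on \<gamma> (\<alpha>`P)" using g(2) bij_betw_def by blast
  define \<gamma>' where "\<gamma>' = restrict (inv_into (\<alpha>`P) \<gamma>) (\<gamma>`(\<alpha>`P))"
  have 1: "\<gamma>' \<in> F (\<beta>`P) (\<alpha>`P)" using fs_D(8)[OF fs g(1)] im unfolding \<gamma>'_def by simp
  have 2: "bij_betw \<gamma>' (\<beta>`P) (\<alpha>`P)" unfolding \<gamma>'_def using bij_betw_inv_into[OF g(2)] im by simp
  have 3: "compose P \<gamma>' \<beta> = \<alpha>"
  proof
    fix x show "compose P \<gamma>' \<beta> x = \<alpha> x"
    proof (cases "x \<in> P")
      case True
      have "\<beta> x = \<gamma> (\<alpha> x)" using g(3) True unfolding compose_def by (metis restrict_apply')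
      then show ?thesis using True inj unfolding compose_def \<gamma>'_def by simp
    next
      case False
      then show ?thesis using sub_hom_D(3)[OF rep_rel_D(1)[OF r]] unfolding compose_def by simp
    qed
  qed
  show ?thesis using rep_rel_D(2,1)[OF r] 1 2 3 unfolding rep_rel_def iso_in_def by blast
qed

lemma rep_trans:
  assumes fs: "fusion_system G p T F" and r: "(\<alpha>,\<beta>) \<in> rep_rel G F P T'" and s: "(\<beta>,\<delta>) \<in> rep_rel G F P T'"
  shows "(\<alpha>,\<delta>) \<in> rep_rel G F P T'"
proof -
  obtain \<gamma> where g: "\<gamma> \<in> F (\<alpha>`P) (\<beta>`P)" "bij_betw \<gamma> (\<alpha>`P) (\<beta>`P)" "compose P \<gamma> \<alpha> = \<beta>"
    using rep_rel_D(3)[OF r] by blast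
  obtain \<eta> where h: "\<eta> \<in> F (\<beta>`P) (\<delta>`P)" "bij_betw \<eta> (\<beta>`P) (\<delta>`P)" "compose P \<eta> \<beta> = \<delta>"
    using rep_rel_D(3)[OF s] by blast
  have 1: "compose (\<alpha>`P) \<eta> \<gamma> \<in> F (\<alpha>`P) (\<delta>`P)" using fs_comp[OF fs g(1) h(1)] .
  have 2: "bij_betw (compose (\<alpha>`P) \<eta> \<gamma>) (\<alpha>`P) (\<delta>`P)"
    unfolding compose_def using bij_betw_trans[OF g(2) h(2)] by (simp add: comp_def)
  have 3: "compose P (compose (\<alpha>`P) \<eta> \<gamma>) \<alpha> = \<delta>"
  proof
    fix x show "compose P (compose (\<alpha>`P) \<eta> \<gamma>) \<alpha> x = \<delta> x"
    proof (cases "x \<in> P")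
      case True
      have "\<beta> x = \<gamma> (\<alpha> x)" using g(3) True unfolding compose_def by (metis restrict_apply')
      moreover have "\<delta> x = \<eta> (\<beta> x)" using h(3) True unfolding compose_def by (metis restrict_apply')
      ultimately show ?thesis using True unfolding compose_def by simp
    next
      case False
      then show ?thesis using sub_hom_D(3)[OF rep_rel_D(2)[OF s]] unfolding compose_def by simp
    qed
  qed
  show ?thesis using rep_rel_D(1)[OF r] rep_rel_D(2)[OF s] 1 2 3 unfolding rep_rel_def iso_in_def by blast
qed

lemma rep_class_eq:
  assumes fs: "fusion_system G p T F" and r: "(\<alpha>,\<beta>) \<in> rep_rel G F P T'"
  shows "rep_rel G F P T' `` {\<alpha>} = rep_rel G F P T' `` {\<beta>}"
proof -
  have "(\<alpha>,x) \<in> rep_rel G F P T' \<longleftrightarrow> (\<beta>,x) \<in> rep_rel G F P T'" for x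
    using rep_trans[OF fs rep_sym[OF fs r], of x] rep_trans[OF fs r, of x] by blast
  then show ?thesis by blast
qed

end

lemma mem_Inter_fam: "\<phi> \<in> \<Inter> {F' Q R | F'. C F'} \<longleftrightarrow> (\<forall>F'. C F' \<longrightarrow> \<phi> \<in> F' Q R)"
  by blast

context group begin

lemma Inter_fs:
  assumes fs0: "fusion_system G p T F0" and c0: "C F0"
  defines "FI \<equiv> (\<lambda>Q R. \<Inter> {F' Q R | F'. fusion_system G p T F' \<and> C F'})"
  shows "fusion_system G p T FI" "\<And>Q R. FI Q R \<subseteq> F0 Q R"
proof -
  have mem: "\<phi> \<in> FI Q R \<longleftrightarrow> (\<forall>F'. fusion_system G p T F' \<and> C F' \<longrightarrow> \<phi> \<in> F' Q R)" for \<phi> Q R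
    unfolding FI_def by (rule mem_Inter_fam)
  show sub: "FI Q R \<subseteq> F0 Q R" for Q R
  proof
    fix \<phi> assume "\<phi> \<in> FI Q R" then show "\<phi> \<in> F0 Q R" using fs0 c0 mem by blast
  qed
  have c1: "p_group G p T" by (rule fs_parts(1)[OF fs0])
  have c2: "\<forall>Q R. FI Q R \<noteq> {} \<longrightarrow> subgroup Q G \<and> Q \<subseteq> T \<and> subgroup R G \<and> R \<subseteq> T"
  proof (intro allI impI)
    fix Q R assume "FI Q R \<noteq> {}"
    then have "F0 Q R \<noteq> {}" using sub[of Q R] by blast
    then show "subgroup Q G \<and> Q \<subseteq> T \<and> subgroup R G \<and> R \<subseteq> T" by (rule fs_parts(2)[OF fs0])
  qed
  have c3: "\<forall>Q R. subgroup Q G \<and> Q \<subseteq> T \<and> subgroup R G \<and> R \<subseteq> T \<longrightarrow>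
        Hom_S G T Q R \<subseteq> FI Q R \<and> FI Q R \<subseteq> {\<phi> \<in> sub_hom G Q R. inj_on \<phi> Q}"
  proof (intro allI impI)
    fix Q R assume a: "subgroup Q G \<and> Q \<subseteq> T \<and> subgroup R G \<and> R \<subseteq> T"
    have h1: "Hom_S G T Q R \<subseteq> FI Q R"
    proof
      fix \<phi> assume h: "\<phi> \<in> Hom_S G T Q R"
      show "\<phi> \<in> FI Q R" unfolding mem
      proof (intro allI impI)
        fix F' assume "fusion_system G p T F' \<and> C F'"
        then have "Hom_S G T Q R \<subseteq> F' Q R" using fs_HomS a by blast
        then show "\<phi> \<in> F' Q R" using h by blast
      qed
    qed
    have "F0 Q R \<subseteq> {\<phi> \<in> sub_hom G Q R. inj_on \<phi> Q}" using fs_parts(3)[OF fs0] a by blast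
    then have h2: "FI Q R \<subseteq> {\<phi> \<in> sub_hom G Q R. inj_on \<phi> Q}" using sub[of Q R] by (rule order_trans[rotated])
    show "Hom_S G T Q R \<subseteq> FI Q R \<and> FI Q R \<subseteq> {\<phi> \<in> sub_hom G Q R. inj_on \<phi> Q}" using h1 h2 by (rule conjI)
  qed
  have c4: "\<forall>Q R \<phi>. \<phi> \<in> FI Q R \<longrightarrow>
        \<phi> \<in> FI Q (\<phi> ` Q) \<and> restrict (inv_into Q \<phi>) (\<phi> ` Q) \<in> FI (\<phi> ` Q) Q"
  proof (intro allI impI)
    fix Q R \<phi> assume h: "\<phi> \<in> FI Q R"
    have h1: "\<phi> \<in> FI Q (\<phi> ` Q)" unfolding mem
    proof (intro allI impI)
      fix F' assume f: "fusion_system G p T F' \<and> C F'"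
      then have "\<phi> \<in> F' Q R" using h mem by blast
      then show "\<phi> \<in> F' Q (\<phi> ` Q)" using fs_D(7) f by blast
    qed
    have h2: "restrict (inv_into Q \<phi>) (\<phi> ` Q) \<in> FI (\<phi> ` Q) Q" unfolding mem
    proof (intro allI impI)
      fix F' assume f: "fusion_system G p T F' \<and> C F'"
      then have "\<phi> \<in> F' Q R" using h mem by blast
      then show "restrict (inv_into Q \<phi>) (\<phi> ` Q) \<in> F' (\<phi> ` Q) Q" using fs_D(8) f by blast
    qed
    show "\<phi> \<in> FI Q (\<phi> ` Q) \<and> restrict (inv_into Q \<phi>) (\<phi> ` Q) \<in> FI (\<phi> ` Q) Q" using h1 h2 by (rule conjI)
  qed
  have c5: "\<forall>Q R U \<phi> \<psi>. \<phi> \<in> FI Q R \<longrightarrow> \<psi> \<in> FI R U \<longrightarrow> compose Q \<psi> \<phi> \<in> FI Q U"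
  proof (intro allI impI)
    fix Q R U \<phi> \<psi> assume h: "\<phi> \<in> FI Q R" "\<psi> \<in> FI R U"
    show "compose Q \<psi> \<phi> \<in> FI Q U" unfolding mem
    proof (intro allI impI)
      fix F' assume f: "fusion_system G p T F' \<and> C F'"
      then have "\<phi> \<in> F' Q R" "\<psi> \<in> F' R U" using h mem by blast+
      then show "compose Q \<psi> \<phi> \<in> F' Q U" using fs_comp f by blast
    qed
  qed
  show "fusion_system G p T FI" unfolding fusion_system_def using c1 c2 c3 c4 c5 by (intro conjI) assumption+
qed

end

context group begin

lemma rel_by_morph:
  assumes fs: "fusion_system G p T F" and \<phi>: "\<phi> \<in> F Q R" and \<alpha>: "\<alpha> \<in> sub_hom G P Q"
    and PG: "subgroup P G" and QT: "Q \<subseteq> T'" and RT: "R \<subseteq> T'"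
  shows "(\<alpha>, compose P \<phi> \<alpha>) \<in> rep_rel G F P T'"
proof -
  have Qsg: "subgroup Q G" by (rule fs_D(3)[OF fs \<phi>])
  have Qc: "Q \<subseteq> carrier G" by (rule subgroup.subset[OF Qsg])
  have Asg: "subgroup (\<alpha>`P) G" by (rule hom_image_subgroup[OF PG \<alpha> Qc])
  have AQ: "\<alpha>`P \<subseteq> Q" using sub_hom_D(2)[OF \<alpha>] by (rule image_subsetI)
  have r1: "restrict \<phi> (\<alpha>`P) \<in> F (\<alpha>`P) (\<phi>`(\<alpha>`P))" by (rule fs_restrict(1)[OF fs \<phi> Asg AQ])
  have r2: "bij_betw (restrict \<phi> (\<alpha>`P)) (\<alpha>`P) (\<phi>`(\<alpha>`P))" by (rule fs_restrict(2)[OF fs \<phi> Asg AQ])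
  have im: "compose P \<phi> \<alpha> ` P = \<phi>`(\<alpha>`P)" unfolding compose_def by auto
  have ce: "compose P (restrict \<phi> (\<alpha>`P)) \<alpha> = compose P \<phi> \<alpha>"
    unfolding compose_def by (rule restrict_ext) simp
  have a1: "\<alpha> \<in> sub_hom G P T'" using sub_hom_mono[OF QT] \<alpha> by (rule subsetD)
  have "compose P \<phi> \<alpha> \<in> sub_hom G P R" by (rule sub_hom_compose[OF \<alpha> fs_D(1)[OF fs \<phi>] PG])
  then have a2: "compose P \<phi> \<alpha> \<in> sub_hom G P T'" using sub_hom_mono[OF RT] by (rule rev_subsetD)
  show ?thesis
  proof (rule rep_relI[OF a1 a2])
    show "restrict \<phi> (\<alpha>`P) \<in> F (\<alpha>`P) (compose P \<phi> \<alpha> ` P)" unfolding im by (rule r1)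
    show "bij_betw (restrict \<phi> (\<alpha>`P)) (\<alpha>`P) (compose P \<phi> \<alpha> ` P)" unfolding im by (rule r2)
    show "compose P (restrict \<phi> (\<alpha>`P)) \<alpha> = compose P \<phi> \<alpha>" by (rule ce)
  qed
qed

lemma rep_refl':
  assumes fs: "fusion_system G p T F" and "\<alpha> \<in> sub_hom G P T'" "subgroup P G" "T' \<subseteq> T"
  shows "(\<alpha>,\<alpha>) \<in> rep_rel G F P T'"
proof (rule rep_refl[OF fs assms(2,3)])
  show "\<alpha>`P \<subseteq> T" using sub_hom_D(2)[OF assms(2)] assms(4) by blast
  show "T' \<subseteq> carrier G" using assms(4) subgroup.subset[OF fs_T[OF fs]] by (rule order_trans)
qed

lemma class_mem:
  assumes fs: "fusion_system G p T F" and "\<alpha> \<in> sub_hom G P T'" "subgroup P G" "T' \<subseteq> T"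
  shows "\<alpha> \<in> rep_cls G F P T' \<alpha>"
  unfolding rep_cls_def using rep_refl'[OF assms] by simp

end

locale tree_fs = group G for G :: "('a,'b) monoid_scheme" (structure) +
  fixes p :: nat and V :: "'v set" and E :: "('v \<times> 'v) set"
    and SV :: "'v \<Rightarrow> 'a set" and SE :: "'v \<times> 'v \<Rightarrow> 'a set"
    and FV :: "'v \<Rightarrow> 'a set \<Rightarrow> 'a set \<Rightarrow> ('a \<Rightarrow> 'a) set"
    and FE :: "'v \<times> 'v \<Rightarrow> 'a set \<Rightarrow> 'a set \<Rightarrow> ('a \<Rightarrow> 'a) set"
    and vs :: 'v and P :: "'a set"
  assumes tree: "fin_tree V E"
    and vs: "vs \<in> V"
    and FVfs: "\<forall>v\<in>V. fusion_system G p (SV v) (FV v)"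
    and FEfs: "\<forall>e\<in>E. fusion_system G p (SE e) (FE e)"
    and incl: "\<forall>v w. (v,w) \<in> E \<longrightarrow> SE (v,w) \<subseteq> SV v \<and> SE (v,w) \<subseteq> SV w \<and>
                 (\<forall>Q R. FE (v,w) Q R \<subseteq> FV v Q R \<and> FE (v,w) Q R \<subseteq> FV w Q R)"
    and H: "hyp_H V E SV SE vs"
    and PG: "subgroup P G" and PS: "P \<subseteq> SV vs"
begin

abbreviation "vert v \<alpha> \<equiv> (v, rep_cls G (FV v) P (SV v) \<alpha>)"
abbreviation "conn \<equiv> orbit_conn G E SV SE FV FE P"
abbreviation "adj \<equiv> orbit_adj G E SV SE FV FE P"

lemma fsV: "v \<in> V \<Longrightarrow> fusion_system G p (SV v) (FV v)" using FVfs by blast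
lemma fsE: "e \<in> E \<Longrightarrow> fusion_system G p (SE e) (FE e)" using FEfs by blast
lemma EV: "(v,w) \<in> E \<Longrightarrow> v \<in> V \<and> w \<in> V" using tree unfolding fin_tree_def by blast
lemma inclE: "(v,w) \<in> E \<Longrightarrow> SE (v,w) \<subseteq> SV v \<and> SE (v,w) \<subseteq> SV w" using incl by blast
lemma SVsg: "v \<in> V \<Longrightarrow> subgroup (SV v) G" by (rule fs_T[OF fsV])
lemma SEsg: "e \<in> E \<Longrightarrow> subgroup (SE e) G" by (rule fs_T[OF fsE])

lemma neighbor:
  assumes v: "v \<in> V" "v \<noteq> vs"
  shows "\<exists>w. w \<in> V \<and> ((v,w) \<in> E \<or> (w,v) \<in> E) \<and> tree_dist E w vs < tree_dist E v vs"
proof -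
  have "(v,vs) \<in> (undir E)\<^sup>*" using tree v(1) vs unfolding fin_tree_def by blast
  then obtain n where n: "(v,vs) \<in> (undir E) ^^ n" using rtrancl_power by blast
  define d where "d = tree_dist E v vs"
  have hd: "(v,vs) \<in> (undir E) ^^ d" unfolding d_def tree_dist_def by (rule LeastI[of _ n]) (rule n)
  have "d \<noteq> 0" using hd v(2) by (cases "d = 0") auto
  then obtain m where m: "d = Suc m" using not0_implies_Suc by blast
  then obtain w where w: "(v,w) \<in> undir E" "(w,vs) \<in> (undir E) ^^ m" using hd relpow_Suc_D2 by metis
  have "tree_dist E w vs \<le> m" unfolding tree_dist_def by (rule Least_le) (rule w(2))
  then have lt: "tree_dist E w vs < tree_dist E v vs" using m d_def by simp
  have e: "(v,w) \<in> E \<or> (w,v) \<in> E" using w(1) unfolding undir_def by blast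
  then have "w \<in> V" using EV by blast
  then show ?thesis using e lt by blast
qed

lemma down:
  assumes v: "v \<in> V" "v \<noteq> vs"
  shows "\<exists>w. w \<in> V \<and> tree_dist E w vs < tree_dist E v vs \<and>
     ((v,w) \<in> E \<and> SE (v,w) = SV v \<or> (w,v) \<in> E \<and> SE (w,v) = SV v)"
proof -
  obtain w where w: "w \<in> V" "(v,w) \<in> E \<or> (w,v) \<in> E" "tree_dist E w vs < tree_dist E v vs"
    using neighbor[OF v] by blast
  have Hv: "\<forall>e\<in>E. \<forall>w. (e = (v,w) \<or> e = (w,v)) \<and> tree_dist E w vs < tree_dist E v vs \<longrightarrow> SE e = SV v"
    using H v unfolding hyp_H_def by blast
  show ?thesis using w Hv by blast
qed

lemma conn_refl: "(x,x) \<in> conn" unfolding orbit_conn_def by simp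

lemma conn_trans: "(x,y) \<in> conn \<Longrightarrow> (y,z) \<in> conn \<Longrightarrow> (x,z) \<in> conn"
  unfolding orbit_conn_def by (rule rtrancl_trans)

lemma conn_sym: assumes "(x,y) \<in> conn" shows "(y,x) \<in> conn"
proof -
  have s: "(undir adj)\<inverse> = undir adj" unfolding undir_def by auto
  have "(x,y) \<in> (undir adj)\<^sup>*" using assms unfolding orbit_conn_def .
  then have "(y,x) \<in> ((undir adj)\<inverse>)\<^sup>*" by (simp add: rtrancl_converse)
  then show ?thesis unfolding orbit_conn_def s .
qed

lemma adj_conn: assumes "(x,y) \<in> adj" shows "(x,y) \<in> conn"
  unfolding orbit_conn_def undir_def using assms by blast

lemma edge_adj:
  assumes e: "(v,w) \<in> E" and \<alpha>: "\<alpha> \<in> sub_hom G P (SE (v,w))"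
  shows "(vert v \<alpha>, vert w \<alpha>) \<in> adj"
proof -
  let ?c = "rep_cls G (FE (v,w)) P (SE (v,w)) \<alpha>"
  have "?c \<in> Rep G (FE (v,w)) P (SE (v,w))"
    unfolding Rep_def rep_cls_def using \<alpha> by (rule quotientI)
  then have ed: "((v,w),?c) \<in> orbit_edges G E SE FE P" unfolding orbit_edges_def using e by blast
  have m: "\<alpha> \<in> ?c" by (rule class_mem[OF fsE[OF e] \<alpha> PG order_refl])
  show ?thesis unfolding orbit_adj_def using ed m by blast
qed

lemma path:
  assumes "v \<in> V"
  shows "SV v \<subseteq> SV vs \<and> (\<forall>\<alpha> \<in> sub_hom G P (SV v). (vert vs \<alpha>, vert v \<alpha>) \<in> conn)"
  using assms
proof (induction "tree_dist E v vs" arbitrary: v rule: less_induct)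
  case (less v)
  show ?case
  proof (cases "v = vs")
    case True
    then show ?thesis using conn_refl by blast
  next
    case False
    obtain w where w: "w \<in> V" "tree_dist E w vs < tree_dist E v vs"
      "(v,w) \<in> E \<and> SE (v,w) = SV v \<or> (w,v) \<in> E \<and> SE (w,v) = SV v"
      using down[OF less.prems False] by blast
    have IH: "SV w \<subseteq> SV vs" "\<And>\<alpha>. \<alpha> \<in> sub_hom G P (SV w) \<Longrightarrow> (vert vs \<alpha>, vert w \<alpha>) \<in> conn"
      using less.hyps[OF w(2) w(1)] by blast+
    from w(3) show ?thesis
    proof
      assume a: "(v,w) \<in> E \<and> SE (v,w) = SV v"
      have sub: "SV v \<subseteq> SV w" using inclE[of v w] a by blast
      have "\<forall>\<alpha> \<in> sub_hom G P (SV v). (vert vs \<alpha>, vert v \<alpha>) \<in> conn"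
      proof
        fix \<alpha> assume \<alpha>: "\<alpha> \<in> sub_hom G P (SV v)"
        have \<alpha>w: "\<alpha> \<in> sub_hom G P (SV w)" using sub_hom_mono[OF sub] \<alpha> by (rule subsetD)
        have "(vert v \<alpha>, vert w \<alpha>) \<in> adj" using edge_adj[of v w \<alpha>] a \<alpha> by simp
        then have "(vert w \<alpha>, vert v \<alpha>) \<in> conn" by (rule conn_sym[OF adj_conn])
        then show "(vert vs \<alpha>, vert v \<alpha>) \<in> conn" by (rule conn_trans[OF IH(2)[OF \<alpha>w]])
      qed
      then show ?thesis using sub IH(1) by blast
    next
      assume a: "(w,v) \<in> E \<and> SE (w,v) = SV v"
      have sub: "SV v \<subseteq> SV w" using inclE[of w v] a by blast
      have "\<forall>\<alpha> \<in> sub_hom G P (SV v). (vert vs \<alpha>, vert v \<alpha>) \<in> conn"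
      proof
        fix \<alpha> assume \<alpha>: "\<alpha> \<in> sub_hom G P (SV v)"
        have \<alpha>w: "\<alpha> \<in> sub_hom G P (SV w)" using sub_hom_mono[OF sub] \<alpha> by (rule subsetD)
        have "(vert w \<alpha>, vert v \<alpha>) \<in> adj" using edge_adj[of w v \<alpha>] a \<alpha> by simp
        then have "(vert w \<alpha>, vert v \<alpha>) \<in> conn" by (rule adj_conn)
        then show "(vert vs \<alpha>, vert v \<alpha>) \<in> conn" by (rule conn_trans[OF IH(2)[OF \<alpha>w]])
      qed
      then show ?thesis using sub IH(1) by blast
    qed
  qed
qed

end

context tree_fs begin

abbreviation "FT \<equiv> completion G p (SV vs) V SV FV"

definition FC :: "'a set \<Rightarrow> 'a set \<Rightarrow> ('a \<Rightarrow> 'a) set" where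
  "FC Q R = {\<phi> \<in> sub_hom G Q R. inj_on \<phi> Q \<and> subgroup Q G \<and> Q \<subseteq> SV vs \<and> subgroup R G \<and> R \<subseteq> SV vs \<and>
     (\<forall>\<alpha> \<in> sub_hom G P Q. (vert vs \<alpha>, vert vs (compose P \<phi> \<alpha>)) \<in> conn)}"

lemma FC_D:
  assumes "\<phi> \<in> FC Q R"
  shows "\<phi> \<in> sub_hom G Q R" "inj_on \<phi> Q" "subgroup Q G" "Q \<subseteq> SV vs" "subgroup R G" "R \<subseteq> SV vs"
    "\<And>\<alpha>. \<alpha> \<in> sub_hom G P Q \<Longrightarrow> (vert vs \<alpha>, vert vs (compose P \<phi> \<alpha>)) \<in> conn"
  using assms unfolding FC_def by blast+

lemma FC_I:
  assumes "\<phi> \<in> sub_hom G Q R" "inj_on \<phi> Q" "subgroup Q G" "Q \<subseteq> SV vs" "subgroup R G" "R \<subseteq> SV vs"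
    "\<And>\<alpha>. \<alpha> \<in> sub_hom G P Q \<Longrightarrow> (vert vs \<alpha>, vert vs (compose P \<phi> \<alpha>)) \<in> conn"
  shows "\<phi> \<in> FC Q R"
  using assms unfolding FC_def by blast

lemma fsS: "fusion_system G p (SV vs) (FV vs)" by (rule fsV[OF vs])

lemma FC_fs: "fusion_system G p (SV vs) FC"
proof -
  have c1: "p_group G p (SV vs)" by (rule fs_parts(1)[OF fsS])
  have c2: "\<forall>Q R. FC Q R \<noteq> {} \<longrightarrow> subgroup Q G \<and> Q \<subseteq> SV vs \<and> subgroup R G \<and> R \<subseteq> SV vs"
  proof (intro allI impI)
    fix Q R assume "FC Q R \<noteq> {}"
    then obtain \<phi> where "\<phi> \<in> FC Q R" by blast
    then show "subgroup Q G \<and> Q \<subseteq> SV vs \<and> subgroup R G \<and> R \<subseteq> SV vs" using FC_D(3-6) by blast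
  qed
  have c3: "\<forall>Q R. subgroup Q G \<and> Q \<subseteq> SV vs \<and> subgroup R G \<and> R \<subseteq> SV vs \<longrightarrow>
        Hom_S G (SV vs) Q R \<subseteq> FC Q R \<and> FC Q R \<subseteq> {\<phi> \<in> sub_hom G Q R. inj_on \<phi> Q}"
  proof (intro allI impI)
    fix Q R assume a: "subgroup Q G \<and> Q \<subseteq> SV vs \<and> subgroup R G \<and> R \<subseteq> SV vs"
    have h1: "Hom_S G (SV vs) Q R \<subseteq> FC Q R"
    proof
      fix \<phi> assume h: "\<phi> \<in> Hom_S G (SV vs) Q R"
      have \<phi>F: "\<phi> \<in> FV vs Q R" using fs_HomS[OF fsS] a h by blast
      show "\<phi> \<in> FC Q R"
      proof (rule FC_I[OF fs_D(1,2)[OF fsS \<phi>F]])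
        show "subgroup Q G" "Q \<subseteq> SV vs" "subgroup R G" "R \<subseteq> SV vs" using a by blast+
        fix \<alpha> assume \<alpha>: "\<alpha> \<in> sub_hom G P Q"
        have "(\<alpha>, compose P \<phi> \<alpha>) \<in> rep_rel G (FV vs) P (SV vs)"
          using rel_by_morph[OF fsS \<phi>F \<alpha> PG] a by blast
        then have "vert vs \<alpha> = vert vs (compose P \<phi> \<alpha>)"
          unfolding rep_cls_def using rep_class_eq[OF fsS] by simp
        then show "(vert vs \<alpha>, vert vs (compose P \<phi> \<alpha>)) \<in> conn" using conn_refl by simp
      qed
    qed
    have h2: "FC Q R \<subseteq> {\<phi> \<in> sub_hom G Q R. inj_on \<phi> Q}" using FC_D(1,2) by blast
    show "Hom_S G (SV vs) Q R \<subseteq> FC Q R \<and> FC Q R \<subseteq> {\<phi> \<in> sub_hom G Q R. inj_on \<phi> Q}"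
      using h1 h2 by (rule conjI)
  qed
  have c4: "\<forall>Q R \<phi>. \<phi> \<in> FC Q R \<longrightarrow>
        \<phi> \<in> FC Q (\<phi> ` Q) \<and> restrict (inv_into Q \<phi>) (\<phi> ` Q) \<in> FC (\<phi> ` Q) Q"
  proof (intro allI impI)
    fix Q R \<phi> assume h: "\<phi> \<in> FC Q R"
    note d = FC_D[OF h]
    have Rc: "R \<subseteq> carrier G" by (rule subgroup.subset[OF d(5)])
    have im: "\<phi>`Q \<subseteq> R" using sub_hom_D(2)[OF d(1)] by (rule image_subsetI)
    have imsg: "subgroup (\<phi>`Q) G" by (rule hom_image_subgroup[OF d(3) d(1) Rc])
    have h1: "\<phi> \<in> FC Q (\<phi> ` Q)"
    proof (rule FC_I[OF sub_hom_image[OF d(1)] d(2) d(3) d(4) imsg])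
      show "\<phi>`Q \<subseteq> SV vs" using im d(6) by (rule order_trans)
      show "\<And>\<alpha>. \<alpha> \<in> sub_hom G P Q \<Longrightarrow> (vert vs \<alpha>, vert vs (compose P \<phi> \<alpha>)) \<in> conn" by (rule d(7))
    qed
    define \<psi> where "\<psi> = restrict (inv_into Q \<phi>) (\<phi> ` Q)"
    have \<psi>hom: "\<psi> \<in> sub_hom G (\<phi>`Q) Q"
      unfolding sub_hom_def
    proof (intro CollectI conjI ballI)
      show "\<psi> \<in> \<phi> ` Q \<rightarrow>\<^sub>E Q" unfolding \<psi>_def by (auto intro: inv_into_into)
      fix a b assume ab: "a \<in> \<phi>`Q" "b \<in> \<phi>`Q"
      then obtain x y where xy: "x \<in> Q" "y \<in> Q" "a = \<phi> x" "b = \<phi> y" by (meson imageE)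
      have xyQ: "x \<otimes> y \<in> Q" by (rule subgroup.m_closed[OF d(3) xy(1,2)])
      have e: "a \<otimes> b = \<phi> (x \<otimes> y)" using sub_hom_D(4)[OF d(1) xy(1,2)] xy(3,4) by simp
      have "a \<otimes> b \<in> \<phi>`Q" using e xyQ by simp
      then have "\<psi> (a \<otimes> b) = inv_into Q \<phi> (\<phi> (x \<otimes> y))" unfolding \<psi>_def using e by simp
      also have "\<dots> = x \<otimes> y" using d(2) xyQ by simp
      finally have l: "\<psi> (a \<otimes> b) = x \<otimes> y" .
      have "\<psi> a = x" "\<psi> b = y" unfolding \<psi>_def using ab xy d(2) by simp_all
      then show "\<psi> (a \<otimes> b) = \<psi> a \<otimes> \<psi> b" using l by simp
    qed
    have \<psi>inj: "inj_on \<psi> (\<phi>`Q)" unfolding \<psi>_def by (simp add: inj_on_inv_into)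
    have h2: "\<psi> \<in> FC (\<phi> ` Q) Q"
    proof (rule FC_I[OF \<psi>hom \<psi>inj imsg _ d(3) d(4)])
      show "\<phi>`Q \<subseteq> SV vs" using im d(6) by (rule order_trans)
      fix \<alpha> assume \<alpha>: "\<alpha> \<in> sub_hom G P (\<phi>`Q)"
      define \<alpha>' where "\<alpha>' = compose P \<psi> \<alpha>"
      have \<alpha>': "\<alpha>' \<in> sub_hom G P Q" unfolding \<alpha>'_def by (rule sub_hom_compose[OF \<alpha> \<psi>hom PG])
      have eq: "compose P \<phi> \<alpha>' = \<alpha>"
      proof
        fix x show "compose P \<phi> \<alpha>' x = \<alpha> x"
        proof (cases "x \<in> P")
          case True
          then have ax: "\<alpha> x \<in> \<phi>`Q" by (rule sub_hom_D(2)[OF \<alpha>])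
          have "\<alpha>' x = inv_into Q \<phi> (\<alpha> x)" unfolding \<alpha>'_def \<psi>_def compose_def using True ax by simp
          then show ?thesis unfolding compose_def using True ax by (simp add: f_inv_into_f)
        next
          case False
          then show ?thesis unfolding compose_def using sub_hom_D(3)[OF \<alpha>] by simp
        qed
      qed
      have "(vert vs \<alpha>', vert vs (compose P \<phi> \<alpha>')) \<in> conn" by (rule d(7)[OF \<alpha>'])
      then have "(vert vs \<alpha>', vert vs \<alpha>) \<in> conn" unfolding eq .
      then show "(vert vs \<alpha>, vert vs (compose P \<psi> \<alpha>)) \<in> conn" unfolding \<alpha>'_def[symmetric] by (rule conn_sym)
    qed
    show "\<phi> \<in> FC Q (\<phi> ` Q) \<and> restrict (inv_into Q \<phi>) (\<phi> ` Q) \<in> FC (\<phi> ` Q) Q"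
      using h1 h2 unfolding \<psi>_def by (rule conjI)
  qed
  have c5: "\<forall>Q R U \<phi> \<psi>. \<phi> \<in> FC Q R \<longrightarrow> \<psi> \<in> FC R U \<longrightarrow> compose Q \<psi> \<phi> \<in> FC Q U"
  proof (intro allI impI)
    fix Q R U \<phi> \<psi> assume h: "\<phi> \<in> FC Q R" "\<psi> \<in> FC R U"
    note d = FC_D[OF h(1)] and e = FC_D[OF h(2)]
    have hom: "compose Q \<psi> \<phi> \<in> sub_hom G Q U" by (rule sub_hom_compose[OF d(1) e(1) d(3)])
    have im: "\<phi>`Q \<subseteq> R" using sub_hom_D(2)[OF d(1)] by (rule image_subsetI)
    have "inj_on (\<psi> \<circ> \<phi>) Q" using d(2) inj_on_subset[OF e(2) im] by (rule comp_inj_on)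
    then have inj: "inj_on (compose Q \<psi> \<phi>) Q" unfolding compose_def by (simp add: comp_def)
    show "compose Q \<psi> \<phi> \<in> FC Q U"
    proof (rule FC_I[OF hom inj d(3) d(4) e(5) e(6)])
      fix \<alpha> assume \<alpha>: "\<alpha> \<in> sub_hom G P Q"
      have \<beta>: "compose P \<phi> \<alpha> \<in> sub_hom G P R" by (rule sub_hom_compose[OF \<alpha> d(1) PG])
      have "\<alpha> \<in> P \<rightarrow> Q" using sub_hom_D(2)[OF \<alpha>] by (rule funcsetI)
      then have ca: "compose P (compose Q \<psi> \<phi>) \<alpha> = compose P \<psi> (compose P \<phi> \<alpha>)"
        by (rule compose_assoc[symmetric])
      have "(vert vs \<alpha>, vert vs (compose P \<phi> \<alpha>)) \<in> conn" by (rule d(7)[OF \<alpha>])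
      moreover have "(vert vs (compose P \<phi> \<alpha>), vert vs (compose P \<psi> (compose P \<phi> \<alpha>))) \<in> conn"
        by (rule e(7)[OF \<beta>])
      ultimately show "(vert vs \<alpha>, vert vs (compose P (compose Q \<psi> \<phi>) \<alpha>)) \<in> conn"
        unfolding ca by (rule conn_trans)
    qed
  qed
  show ?thesis unfolding fusion_system_def using c1 c2 c3 c4 c5 by (intro conjI) assumption+
qed

end

context tree_fs begin

lemma SV_sub: "v \<in> V \<Longrightarrow> SV v \<subseteq> SV vs" using path by blast
lemma path_conn: "v \<in> V \<Longrightarrow> \<alpha> \<in> sub_hom G P (SV v) \<Longrightarrow> (vert vs \<alpha>, vert v \<alpha>) \<in> conn"
  using path by blast

lemma FC_contains: assumes v: "v \<in> V" shows "FV v Q (SV v) \<subseteq> FC Q (SV v)"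
proof
  fix \<phi> assume \<phi>: "\<phi> \<in> FV v Q (SV v)"
  note d = fs_D[OF fsV[OF v] \<phi>]
  have sub: "SV v \<subseteq> SV vs" by (rule SV_sub[OF v])
  show "\<phi> \<in> FC Q (SV v)"
  proof (rule FC_I[OF d(1,2,3) _ d(5)])
    show "Q \<subseteq> SV vs" using d(4) sub by (rule order_trans)
    show "SV v \<subseteq> SV vs" by (rule sub)
    fix \<alpha> assume \<alpha>: "\<alpha> \<in> sub_hom G P Q"
    have \<alpha>v: "\<alpha> \<in> sub_hom G P (SV v)" using sub_hom_mono[OF d(4)] \<alpha> by (rule subsetD)
    have \<beta>: "compose P \<phi> \<alpha> \<in> sub_hom G P (SV v)" by (rule sub_hom_compose[OF \<alpha> d(1) PG])
    have "(\<alpha>, compose P \<phi> \<alpha>) \<in> rep_rel G (FV v) P (SV v)"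
      by (rule rel_by_morph[OF fsV[OF v] \<phi> \<alpha> PG d(4) order_refl])
    then have eq: "vert v \<alpha> = vert v (compose P \<phi> \<alpha>)"
      unfolding rep_cls_def using rep_class_eq[OF fsV[OF v]] by simp
    have "(vert vs \<alpha>, vert v \<alpha>) \<in> conn" by (rule path_conn[OF v \<alpha>v])
    moreover have "(vert v (compose P \<phi> \<alpha>), vert vs (compose P \<phi> \<alpha>)) \<in> conn"
      by (rule conn_sym[OF path_conn[OF v \<beta>]])
    ultimately show "(vert vs \<alpha>, vert vs (compose P \<phi> \<alpha>)) \<in> conn"
      unfolding eq by (rule conn_trans)
  qed
qed

lemma FC_C: "\<forall>v\<in>V. \<forall>Q'. FV v Q' (SV v) \<subseteq> FC Q' (SV v)"
  using FC_contains by blast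

lemma FT_eq: "FT = (\<lambda>Q R. \<Inter> {F' Q R | F'. fusion_system G p (SV vs) F' \<and>
      (\<lambda>F'. \<forall>v\<in>V. \<forall>Q'. FV v Q' (SV v) \<subseteq> F' Q' (SV v)) F'})"
  unfolding completion_def by simp

lemma FT_fs: "fusion_system G p (SV vs) FT"
  unfolding FT_eq by (rule Inter_fs(1)[OF FC_fs, of "\<lambda>F'. \<forall>v\<in>V. \<forall>Q'. FV v Q' (SV v) \<subseteq> F' Q' (SV v)", OF FC_C])

lemma FT_FC: "FT Q R \<subseteq> FC Q R"
  unfolding FT_eq by (rule Inter_fs(2)[OF FC_fs, of "\<lambda>F'. \<forall>v\<in>V. \<forall>Q'. FV v Q' (SV v) \<subseteq> F' Q' (SV v)", OF FC_C])

lemma FT_contains: "v \<in> V \<Longrightarrow> FV v Q (SV v) \<subseteq> FT Q (SV v)"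
  unfolding completion_def mem_Inter_fam by blast

lemma relV_FT:
  assumes v: "v \<in> V" and r: "(\<alpha>,\<beta>) \<in> rep_rel G (FV v) P (SV v)"
  shows "(\<alpha>,\<beta>) \<in> rep_rel G FT P (SV vs)"
proof -
  obtain \<gamma> where g: "\<gamma> \<in> FV v (\<alpha>`P) (\<beta>`P)" "bij_betw \<gamma> (\<alpha>`P) (\<beta>`P)" "compose P \<gamma> \<alpha> = \<beta>"
    using rep_rel_D(3)[OF r] by blast
  have sub: "SV v \<subseteq> SV vs" by (rule SV_sub[OF v])
  have im: "\<gamma>`(\<alpha>`P) = \<beta>`P" by (rule bij_betw_imp_surj_on[OF g(2)])
  have bsub: "\<beta>`P \<subseteq> SV v" using fs_D(6)[OF fsV[OF v] g(1)] .
  have "\<gamma> \<in> FV v (\<alpha>`P) (SV v)"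
    by (rule fs_codom[OF fsV[OF v] g(1)]) (simp_all only: im bsub SVsg[OF v] order_refl)
  then have "\<gamma> \<in> FT (\<alpha>`P) (SV v)" using FT_contains[OF v] by blast
  then have g1: "\<gamma> \<in> FT (\<alpha>`P) (\<beta>`P)"
  proof (rule fs_codom[OF FT_fs])
    show "\<gamma>`(\<alpha>`P) \<subseteq> \<beta>`P" using im by simp
    show "subgroup (\<beta>`P) G" by (rule fs_D(5)[OF fsV[OF v] g(1)])
    show "\<beta>`P \<subseteq> SV vs" using bsub sub by (rule order_trans)
  qed
  have a1: "\<alpha> \<in> sub_hom G P (SV vs)" using sub_hom_mono[OF sub] rep_rel_D(1)[OF r] by (rule subsetD)
  have a2: "\<beta> \<in> sub_hom G P (SV vs)" using sub_hom_mono[OF sub] rep_rel_D(2)[OF r] by (rule subsetD)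
  show ?thesis unfolding rep_rel_def iso_in_def using a1 a2 g1 g(2) g(3) by blast
qed

lemma vert_eq:
  assumes v: "v \<in> V" and \<alpha>: "\<alpha> \<in> sub_hom G P (SV v)" and \<beta>: "\<beta> \<in> sub_hom G P (SV w)"
    and e: "vert v \<alpha> = vert w \<beta>"
  shows "w = v" "(\<alpha>,\<beta>) \<in> rep_rel G (FV v) P (SV v)"
proof -
  show wv: "w = v" using e by simp
  have "\<beta> \<in> rep_cls G (FV v) P (SV v) \<beta>" using class_mem[OF fsV[OF v] _ PG order_refl] \<beta> wv by simp
  then have "\<beta> \<in> rep_cls G (FV v) P (SV v) \<alpha>" using e wv by simp
  then show "(\<alpha>,\<beta>) \<in> rep_rel G (FV v) P (SV v)" unfolding rep_cls_def by simp
qed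

lemma quot_rep:
  assumes "c \<in> A // r" obtains x where "x \<in> A" "c = r `` {x}"
  using assms unfolding quotient_def by blast

lemma adj_shape:
  assumes "(x,y) \<in> adj"
  shows "\<exists>v w \<gamma>. (v,w) \<in> E \<and> \<gamma> \<in> sub_hom G P (SE (v,w)) \<and> x = vert v \<gamma> \<and> y = vert w \<gamma>"
proof -
  obtain v w c \<gamma> where h: "((v,w),c) \<in> orbit_edges G E SE FE P" "\<gamma> \<in> c"
    "x = vert v \<gamma>" "y = vert w \<gamma>"
    using assms unfolding orbit_adj_def by blast
  have e: "(v,w) \<in> E" "c \<in> Rep G (FE (v,w)) P (SE (v,w))" using h(1) unfolding orbit_edges_def by blast+
  obtain \<delta> where "c = rep_rel G (FE (v,w)) P (SE (v,w)) `` {\<delta>}"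
    using e(2) unfolding Rep_def by (rule quot_rep)
  then have "(\<delta>,\<gamma>) \<in> rep_rel G (FE (v,w)) P (SE (v,w))" using h(2) by simp
  then have "\<gamma> \<in> sub_hom G P (SE (v,w))" by (rule rep_rel_D(2))
  then show ?thesis using e(1) h(3,4) by blast
qed

lemma K_fwd:
  assumes c: "(x,y) \<in> conn" and v: "v \<in> V" and \<alpha>: "\<alpha> \<in> sub_hom G P (SV v)" and x: "x = vert v \<alpha>"
  shows "\<exists>w \<beta>. w \<in> V \<and> \<beta> \<in> sub_hom G P (SV w) \<and> y = vert w \<beta> \<and> (\<alpha>,\<beta>) \<in> rep_rel G FT P (SV vs)"
  using c[unfolded orbit_conn_def]
proof (induction rule: rtrancl_induct)
  case base
  have "\<alpha> \<in> sub_hom G P (SV vs)" using sub_hom_mono[OF SV_sub[OF v]] \<alpha> by (rule subsetD)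
  then have "(\<alpha>,\<alpha>) \<in> rep_rel G FT P (SV vs)" by (rule rep_refl'[OF FT_fs _ PG order_refl])
  then show ?case using v \<alpha> x by blast
next
  case (step y z)
  obtain w \<beta> where IH: "w \<in> V" "\<beta> \<in> sub_hom G P (SV w)" "y = vert w \<beta>" "(\<alpha>,\<beta>) \<in> rep_rel G FT P (SV vs)"
    using step.IH by blast
  have "(y,z) \<in> adj \<or> (z,y) \<in> adj" using step.hyps(2) unfolding undir_def by blast
  then show ?case
  proof
    assume "(y,z) \<in> adj"
    then obtain v1 w1 \<gamma> where a: "(v1,w1) \<in> E" "\<gamma> \<in> sub_hom G P (SE (v1,w1))" "y = vert v1 \<gamma>" "z = vert w1 \<gamma>"
      using adj_shape by blast
    have g1: "\<gamma> \<in> sub_hom G P (SV v1)" using sub_hom_mono inclE[OF a(1)] a(2) by blast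
    have g2: "\<gamma> \<in> sub_hom G P (SV w1)" using sub_hom_mono inclE[OF a(1)] a(2) by blast
    have "vert w \<beta> = vert v1 \<gamma>" using IH(3) a(3) by (rule trans[OF sym])
    then have "(\<beta>,\<gamma>) \<in> rep_rel G (FV w) P (SV w)" by (rule vert_eq(2)[OF IH(1,2) g1])
    then have "(\<beta>,\<gamma>) \<in> rep_rel G FT P (SV vs)" by (rule relV_FT[OF IH(1)])
    then have "(\<alpha>,\<gamma>) \<in> rep_rel G FT P (SV vs)" by (rule rep_trans[OF FT_fs IH(4)])
    then show ?case using EV[OF a(1)] g2 a(4) by blast
  next
    assume "(z,y) \<in> adj"
    then obtain v1 w1 \<gamma> where a: "(v1,w1) \<in> E" "\<gamma> \<in> sub_hom G P (SE (v1,w1))" "z = vert v1 \<gamma>" "y = vert w1 \<gamma>"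
      using adj_shape by blast
    have g1: "\<gamma> \<in> sub_hom G P (SV v1)" using sub_hom_mono inclE[OF a(1)] a(2) by blast
    have g2: "\<gamma> \<in> sub_hom G P (SV w1)" using sub_hom_mono inclE[OF a(1)] a(2) by blast
    have "vert w \<beta> = vert w1 \<gamma>" using IH(3) a(4) by (rule trans[OF sym])
    then have "(\<beta>,\<gamma>) \<in> rep_rel G (FV w) P (SV w)" by (rule vert_eq(2)[OF IH(1,2) g2])
    then have "(\<beta>,\<gamma>) \<in> rep_rel G FT P (SV vs)" by (rule relV_FT[OF IH(1)])
    then have "(\<alpha>,\<gamma>) \<in> rep_rel G FT P (SV vs)" by (rule rep_trans[OF FT_fs IH(4)])
    then show ?case using EV[OF a(1)] g1 a(3) by blast
  qed
qed

lemma K_bwd: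
  assumes v: "v \<in> V" and w: "w \<in> V" and \<alpha>: "\<alpha> \<in> sub_hom G P (SV v)" and \<beta>: "\<beta> \<in> sub_hom G P (SV w)"
    and r: "(\<alpha>,\<beta>) \<in> rep_rel G FT P (SV vs)"
  shows "(vert v \<alpha>, vert w \<beta>) \<in> conn"
proof -
  obtain \<gamma> where g: "\<gamma> \<in> FT (\<alpha>`P) (\<beta>`P)" "compose P \<gamma> \<alpha> = \<beta>"
    using rep_rel_D(3)[OF r] by blast
  have "\<gamma> \<in> FC (\<alpha>`P) (\<beta>`P)" using FT_FC g(1) by blast
  then have "(vert vs \<alpha>, vert vs (compose P \<gamma> \<alpha>)) \<in> conn"
    by (rule FC_D(7)) (rule sub_hom_image[OF \<alpha>])
  then have m: "(vert vs \<alpha>, vert vs \<beta>) \<in> conn" unfolding g(2) .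
  have "(vert v \<alpha>, vert vs \<alpha>) \<in> conn" by (rule conn_sym[OF path_conn[OF v \<alpha>]])
  then have "(vert v \<alpha>, vert vs \<beta>) \<in> conn" using m by (rule conn_trans)
  then show ?thesis using path_conn[OF w \<beta>] by (rule conn_trans)
qed

end

context tree_fs begin

abbreviation "\<iota> \<equiv> restrict id P"

lemma iota_hom: "\<iota> \<in> sub_hom G P (SV vs)"
  unfolding sub_hom_def
proof (intro CollectI conjI ballI)
  show "\<iota> \<in> P \<rightarrow>\<^sub>E SV vs" using PS by auto
  fix x y assume "x \<in> P" "y \<in> P"
  moreover then have "x \<otimes> y \<in> P" by (rule subgroup.m_closed[OF PG])
  ultimately show "\<iota> (x \<otimes> y) = \<iota> x \<otimes> \<iota> y" by simp
qed

lemma iota_im: "\<iota> ` P = P" by simp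

lemma compose_iota: assumes "\<beta> \<in> sub_hom G P R" shows "compose P \<beta> \<iota> = \<beta>"
proof
  fix x show "compose P \<beta> \<iota> x = \<beta> x"
    unfolding compose_def using sub_hom_D(3)[OF assms, of x] by (cases "x \<in> P") simp_all
qed

lemma FT_of_rel:
  assumes R: "subgroup R G" "R \<subseteq> SV vs" and \<beta>: "\<beta> \<in> sub_hom G P R"
    and r: "(\<iota>,\<beta>) \<in> rep_rel G FT P (SV vs)"
  shows "\<beta> \<in> FT P R"
proof -
  obtain \<gamma> where g: "\<gamma> \<in> FT (\<iota>`P) (\<beta>`P)" "compose P \<gamma> \<iota> = \<beta>"
    using rep_rel_D(3)[OF r] by blast
  have g1: "\<gamma> \<in> FT P (\<beta>`P)" using g(1) iota_im by simp
  have "compose P \<gamma> \<iota> = \<gamma>" by (rule compose_iota[OF fs_D(1)[OF FT_fs g1]])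
  then have "\<gamma> = \<beta>" using g(2) by simp
  then have b1: "\<beta> \<in> FT P (\<beta>`P)" using g1 by simp
  show ?thesis
  proof (rule fs_codom[OF FT_fs b1 _ R])
    show "\<beta>`P \<subseteq> R" using sub_hom_D(2)[OF \<beta>] by (rule image_subsetI)
  qed
qed

lemma rel_of_FT:
  assumes \<beta>: "\<beta> \<in> FT P R"
  shows "(\<iota>,\<beta>) \<in> rep_rel G FT P (SV vs)"
proof -
  note d = fs_D[OF FT_fs \<beta>]
  have b2: "\<beta> \<in> sub_hom G P (SV vs)" using sub_hom_mono[OF d(6)] d(1) by (rule subsetD)
  have b3: "\<beta> \<in> FT (\<iota>`P) (\<beta>`P)" using d(7) iota_im by simp
  have b4: "bij_betw \<beta> (\<iota>`P) (\<beta>`P)" using inj_on_imp_bij_betw[OF d(2)] iota_im by simp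
  have b5: "compose P \<beta> \<iota> = \<beta>" by (rule compose_iota[OF d(1)])
  show ?thesis unfolding rep_rel_def iso_in_def using iota_hom b2 b3 b4 b5 by blast
qed

lemma part_a1:
  "conn `` {vert vs \<iota>} = {(v,c). v \<in> V \<and> c \<in> Rep_in G FT (FV v) P (SV v)}"
proof (rule equalityI; rule subsetI)
  fix y assume "y \<in> conn `` {vert vs \<iota>}"
  then have "(vert vs \<iota>, y) \<in> conn" by simp
  then obtain w \<beta> where h: "w \<in> V" "\<beta> \<in> sub_hom G P (SV w)" "y = vert w \<beta>" "(\<iota>,\<beta>) \<in> rep_rel G FT P (SV vs)"
    using K_fwd[OF _ vs iota_hom refl] by blast
  have "\<beta> \<in> FT P (SV w)" by (rule FT_of_rel[OF SVsg[OF h(1)] SV_sub[OF h(1)] h(2) h(4)])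
  then have "rep_cls G (FV w) P (SV w) \<beta> \<in> Rep_in G FT (FV w) P (SV w)"
    unfolding Rep_in_def rep_cls_def by (rule quotientI)
  then show "y \<in> {(v,c). v \<in> V \<and> c \<in> Rep_in G FT (FV v) P (SV v)}" using h(1,3) by simp
next
  fix y assume "y \<in> {(v,c). v \<in> V \<and> c \<in> Rep_in G FT (FV v) P (SV v)}"
  then obtain v c where y: "y = (v,c)" "v \<in> V" "c \<in> Rep_in G FT (FV v) P (SV v)" by blast
  obtain \<beta> where b: "\<beta> \<in> FT P (SV v)" "c = rep_rel G (FV v) P (SV v) `` {\<beta>}"
    using y(3) unfolding Rep_in_def by (rule quot_rep)
  have bh: "\<beta> \<in> sub_hom G P (SV v)" by (rule fs_D(1)[OF FT_fs b(1)])
  have "(vert vs \<iota>, vert v \<beta>) \<in> conn"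
    by (rule K_bwd[OF vs y(2) iota_hom bh rel_of_FT[OF b(1)]])
  moreover have "y = vert v \<beta>" using y(1) b(2) unfolding rep_cls_def by simp
  ultimately show "y \<in> conn `` {vert vs \<iota>}" by simp
qed

lemma part_a2:
  "{\<epsilon> \<in> orbit_edges G E SE FE P. \<exists>x \<in> conn `` {vert vs \<iota>}. orbit_incident G SV FV P x \<epsilon>}
    = {(e,c). e \<in> E \<and> c \<in> Rep_in G FT (FE e) P (SE e)}"
proof (rule equalityI; rule subsetI)
  fix \<epsilon> assume "\<epsilon> \<in> {\<epsilon> \<in> orbit_edges G E SE FE P. \<exists>x \<in> conn `` {vert vs \<iota>}. orbit_incident G SV FV P x \<epsilon>}"
  then have h: "\<epsilon> \<in> orbit_edges G E SE FE P" "\<exists>x \<in> conn `` {vert vs \<iota>}. orbit_incident G SV FV P x \<epsilon>" by blast+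
  then obtain x where x: "(vert vs \<iota>, x) \<in> conn" "orbit_incident G SV FV P x \<epsilon>" by blast
  obtain v w c \<gamma> where i: "\<epsilon> = ((v,w),c)" "\<gamma> \<in> c"
      "x = vert v \<gamma> \<or> x = vert w \<gamma>"
    using x(2) unfolding orbit_incident_def by blast
  have e: "(v,w) \<in> E" "c \<in> Rep G (FE (v,w)) P (SE (v,w))" using h(1) i(1) unfolding orbit_edges_def by blast+
  note fse = fsE[OF e(1)]
  obtain \<delta> where dl: "c = rep_rel G (FE (v,w)) P (SE (v,w)) `` {\<delta>}"
    using e(2) unfolding Rep_def by (rule quot_rep)
  then have dg: "(\<delta>,\<gamma>) \<in> rep_rel G (FE (v,w)) P (SE (v,w))" using i(2) by simp
  then have g: "\<gamma> \<in> sub_hom G P (SE (v,w))" by (rule rep_rel_D(2))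
  have ceq: "c = rep_rel G (FE (v,w)) P (SE (v,w)) `` {\<gamma>}" using dl rep_class_eq[OF fse dg] by simp
  have sv: "SE (v,w) \<subseteq> SV v" "SE (v,w) \<subseteq> SV w" using inclE[OF e(1)] by blast+
  obtain u \<beta> where k: "u \<in> V" "\<beta> \<in> sub_hom G P (SV u)" "x = vert u \<beta>" "(\<iota>,\<beta>) \<in> rep_rel G FT P (SV vs)"
    using K_fwd[OF x(1) vs iota_hom refl] by blast
  have "(\<beta>,\<gamma>) \<in> rep_rel G FT P (SV vs)"
    using i(3)
  proof
    assume xa: "x = vert v \<gamma>"
    have "vert u \<beta> = vert v \<gamma>" using k(3) xa by (rule trans[OF sym])
    then show "(\<beta>,\<gamma>) \<in> rep_rel G FT P (SV vs)"
      by (rule relV_FT[OF k(1) vert_eq(2)[OF k(1,2) subsetD[OF sub_hom_mono[OF sv(1)] g]]])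
  next
    assume xa: "x = vert w \<gamma>"
    have "vert u \<beta> = vert w \<gamma>" using k(3) xa by (rule trans[OF sym])
    then show "(\<beta>,\<gamma>) \<in> rep_rel G FT P (SV vs)"
      by (rule relV_FT[OF k(1) vert_eq(2)[OF k(1,2) subsetD[OF sub_hom_mono[OF sv(2)] g]]])
  qed
  then have "(\<iota>,\<gamma>) \<in> rep_rel G FT P (SV vs)" by (rule rep_trans[OF FT_fs k(4)])
  moreover have "SE (v,w) \<subseteq> SV vs" using sv(1) SV_sub[OF conjunct1[OF EV[OF e(1)]]] by (rule order_trans)
  ultimately have "\<gamma> \<in> FT P (SE (v,w))" using FT_of_rel[OF SEsg[OF e(1)] _ g] by blast
  then have "c \<in> Rep_in G FT (FE (v,w)) P (SE (v,w))" unfolding Rep_in_def ceq by (rule quotientI)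
  then show "\<epsilon> \<in> {(e,c). e \<in> E \<and> c \<in> Rep_in G FT (FE e) P (SE e)}" using i(1) e(1) by simp
next
  fix \<epsilon> assume "\<epsilon> \<in> {(e,c). e \<in> E \<and> c \<in> Rep_in G FT (FE e) P (SE e)}"
  then have m: "fst \<epsilon> \<in> E \<and> snd \<epsilon> \<in> Rep_in G FT (FE (fst \<epsilon>)) P (SE (fst \<epsilon>))"
    by (simp add: case_prod_beta)
  define v w c where "v = fst (fst \<epsilon>)" "w = snd (fst \<epsilon>)" "c = snd \<epsilon>"
  have h: "\<epsilon> = ((v,w),c)" "(v,w) \<in> E" "c \<in> Rep_in G FT (FE (v,w)) P (SE (v,w))"
    using m unfolding v_w_c_def by simp_all
  obtain \<gamma> where g: "\<gamma> \<in> FT P (SE (v,w))" "c = rep_rel G (FE (v,w)) P (SE (v,w)) `` {\<gamma>}"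
    using h(3) unfolding Rep_in_def by (rule quot_rep)
  have gh: "\<gamma> \<in> sub_hom G P (SE (v,w))" by (rule fs_D(1)[OF FT_fs g(1)])
  have "c \<in> Rep G (FE (v,w)) P (SE (v,w))" unfolding Rep_def g(2) using gh by (rule quotientI)
  then have e1: "\<epsilon> \<in> orbit_edges G E SE FE P" unfolding orbit_edges_def using h(1,2) by simp
  have gc: "\<gamma> \<in> c" unfolding g(2) using class_mem[OF fsE[OF h(2)] gh PG order_refl] unfolding rep_cls_def .
  have inc: "orbit_incident G SV FV P (vert v \<gamma>) \<epsilon>" unfolding orbit_incident_def using h(1) gc by blast
  have vV: "v \<in> V" using EV[OF h(2)] by blast
  have gv: "\<gamma> \<in> sub_hom G P (SV v)" using sub_hom_mono inclE[OF h(2)] gh by blast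
  have "(vert vs \<iota>, vert v \<gamma>) \<in> conn" by (rule K_bwd[OF vs vV iota_hom gv rel_of_FT[OF g(1)]])
  then have "vert v \<gamma> \<in> conn `` {vert vs \<iota>}" by simp
  then show "\<epsilon> \<in> {\<epsilon> \<in> orbit_edges G E SE FE P. \<exists>x \<in> conn `` {vert vs \<iota>}. orbit_incident G SV FV P x \<epsilon>}"
    using e1 inc by blast
qed

end

definition PhiG where
  "PhiG G V SV FV P K T M = rep_rel G K P T `` {SOME \<alpha>. \<exists>v\<in>V. \<alpha> \<in> sub_hom G P (SV v) \<and> (v, rep_cls G (FV v) P (SV v) \<alpha>) \<in> M}"

context tree_fs begin

lemma conn_class_eq: assumes "(x,y) \<in> conn" shows "conn `` {x} = conn `` {y}"
proof (rule equalityI; rule subsetI)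
  fix z assume "z \<in> conn `` {x}"
  then have "(x,z) \<in> conn" by simp
  then have "(y,z) \<in> conn" by (rule conn_trans[OF conn_sym[OF assms]])
  then show "z \<in> conn `` {y}" by simp
next
  fix z assume "z \<in> conn `` {y}"
  then have "(y,z) \<in> conn" by simp
  then have "(x,z) \<in> conn" by (rule conn_trans[OF assms])
  then show "z \<in> conn `` {x}" by simp
qed

lemma RV_elem:
  assumes "x \<in> orbit_vertices G V SV FV P"
  obtains v \<alpha> where "v \<in> V" "\<alpha> \<in> sub_hom G P (SV v)" "x = vert v \<alpha>"
proof -
  have m: "fst x \<in> V" "snd x \<in> Rep G (FV (fst x)) P (SV (fst x))"
    using assms unfolding orbit_vertices_def by (simp_all add: case_prod_beta)
  obtain \<alpha> where a: "\<alpha> \<in> sub_hom G P (SV (fst x))" "snd x = rep_rel G (FV (fst x)) P (SV (fst x)) `` {\<alpha>}"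
    using m(2) unfolding Rep_def by (rule quot_rep)
  have "x = vert (fst x) \<alpha>" unfolding rep_cls_def using a(2) by (simp add: prod_eq_iff)
  then show ?thesis using that m(1) a(1) by blast
qed

lemma vert_RV:
  assumes "v \<in> V" "\<alpha> \<in> sub_hom G P (SV v)"
  shows "vert v \<alpha> \<in> orbit_vertices G V SV FV P"
proof -
  have "rep_cls G (FV v) P (SV v) \<alpha> \<in> Rep G (FV v) P (SV v)"
    unfolding Rep_def rep_cls_def using assms(2) by (rule quotientI)
  then show ?thesis unfolding orbit_vertices_def using assms(1) by simp
qed

abbreviation "Phi \<equiv> PhiG G V SV FV P FT (SV vs)"

lemma sub_S: "v \<in> V \<Longrightarrow> \<alpha> \<in> sub_hom G P (SV v) \<Longrightarrow> \<alpha> \<in> sub_hom G P (SV vs)"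
  using sub_hom_mono[OF SV_sub] by blast

lemma Phi_eq:
  assumes v: "v \<in> V" and \<alpha>: "\<alpha> \<in> sub_hom G P (SV v)"
  shows "Phi (conn `` {vert v \<alpha>}) = rep_cls G FT P (SV vs) \<alpha>"
proof -
  let ?Q = "\<lambda>\<alpha>'. \<exists>v'\<in>V. \<alpha>' \<in> sub_hom G P (SV v') \<and> vert v' \<alpha>' \<in> conn `` {vert v \<alpha>}"
  have ex: "?Q \<alpha>" using v \<alpha> conn_refl by blast
  define \<alpha>' where "\<alpha>' = (SOME \<alpha>'. ?Q \<alpha>')"
  have "?Q \<alpha>'" unfolding \<alpha>'_def using someI[of ?Q \<alpha>] ex by blast
  then obtain v' where v': "v' \<in> V" "\<alpha>' \<in> sub_hom G P (SV v')" "(vert v \<alpha>, vert v' \<alpha>') \<in> conn" by auto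
  obtain w \<beta> where k: "w \<in> V" "\<beta> \<in> sub_hom G P (SV w)" "vert v' \<alpha>' = vert w \<beta>" "(\<alpha>,\<beta>) \<in> rep_rel G FT P (SV vs)"
    using K_fwd[OF v'(3) v \<alpha> refl] by blast
  have "(\<alpha>',\<beta>) \<in> rep_rel G FT P (SV vs)" by (rule relV_FT[OF v'(1) vert_eq(2)[OF v'(1,2) k(2,3)]])
  then have "(\<alpha>,\<alpha>') \<in> rep_rel G FT P (SV vs)" by (rule rep_trans[OF FT_fs k(4) rep_sym[OF FT_fs]])
  then have "rep_rel G FT P (SV vs) `` {\<alpha>'} = rep_rel G FT P (SV vs) `` {\<alpha>}"
    using rep_class_eq[OF FT_fs] by metis
  then show ?thesis unfolding PhiG_def rep_cls_def \<alpha>'_def .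
qed

lemma part_b:
  "bij_betw Phi (orbit_vertices G V SV FV P // conn) (Rep G FT P (SV vs))"
  unfolding bij_betw_def
proof
  show "inj_on Phi (orbit_vertices G V SV FV P // conn)"
  proof (rule inj_onI)
    fix XX Y assume X: "XX \<in> orbit_vertices G V SV FV P // conn" and Y: "Y \<in> orbit_vertices G V SV FV P // conn"
      and e: "Phi XX = Phi Y"
    obtain x where x: "x \<in> orbit_vertices G V SV FV P" "XX = conn `` {x}" using X by (rule quot_rep)
    obtain y where y: "y \<in> orbit_vertices G V SV FV P" "Y = conn `` {y}" using Y by (rule quot_rep)
    obtain v \<alpha> where a: "v \<in> V" "\<alpha> \<in> sub_hom G P (SV v)" "x = vert v \<alpha>" using x(1) by (rule RV_elem)
    obtain w \<beta> where b: "w \<in> V" "\<beta> \<in> sub_hom G P (SV w)" "y = vert w \<beta>" using y(1) by (rule RV_elem)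
    have "rep_cls G FT P (SV vs) \<alpha> = rep_cls G FT P (SV vs) \<beta>"
      using e Phi_eq[OF a(1,2)] Phi_eq[OF b(1,2)] x(2) y(2) a(3) b(3) by simp
    moreover have "\<beta> \<in> rep_cls G FT P (SV vs) \<beta>" by (rule class_mem[OF FT_fs sub_S[OF b(1,2)] PG order_refl])
    ultimately have "(\<alpha>,\<beta>) \<in> rep_rel G FT P (SV vs)" unfolding rep_cls_def by blast
    then have "(vert v \<alpha>, vert w \<beta>) \<in> conn" by (rule K_bwd[OF a(1) b(1) a(2) b(2)])
    then show "XX = Y" unfolding x(2) y(2) a(3) b(3) by (rule conn_class_eq)
  qed
  show "Phi ` (orbit_vertices G V SV FV P // conn) = Rep G FT P (SV vs)"
  proof (rule equalityI; rule subsetI)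
    fix c assume "c \<in> Phi ` (orbit_vertices G V SV FV P // conn)"
    then obtain XX where X: "XX \<in> orbit_vertices G V SV FV P // conn" "c = Phi XX" by blast
    obtain x where x: "x \<in> orbit_vertices G V SV FV P" "XX = conn `` {x}" using X(1) by (rule quot_rep)
    obtain v \<alpha> where a: "v \<in> V" "\<alpha> \<in> sub_hom G P (SV v)" "x = vert v \<alpha>" using x(1) by (rule RV_elem)
    have "c = rep_cls G FT P (SV vs) \<alpha>" using X(2) x(2) a(3) Phi_eq[OF a(1,2)] by simp
    then show "c \<in> Rep G FT P (SV vs)" unfolding Rep_def rep_cls_def using sub_S[OF a(1,2)] by (simp add: quotientI)
  next
    fix c assume "c \<in> Rep G FT P (SV vs)"
    then obtain \<alpha> where a: "\<alpha> \<in> sub_hom G P (SV vs)" "c = rep_rel G FT P (SV vs) `` {\<alpha>}"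
      unfolding Rep_def by (rule quot_rep)
    have "conn `` {vert vs \<alpha>} \<in> orbit_vertices G V SV FV P // conn"
      using vert_RV[OF vs a(1)] by (rule quotientI)
    moreover have "Phi (conn `` {vert vs \<alpha>}) = c" using Phi_eq[OF vs a(1)] a(2) unfolding rep_cls_def by simp
    ultimately show "c \<in> Phi ` (orbit_vertices G V SV FV P // conn)" by (metis image_eqI)
  qed
qed

end

theorem proposition2p5:
  fixes G :: "'a monoid" and p :: nat and V :: "'v set" and E :: "('v \<times> 'v) set"
    and SV :: "'v \<Rightarrow> 'a set" and SE :: "'v \<times> 'v \<Rightarrow> 'a set"
    and FV :: "'v \<Rightarrow> 'a set \<Rightarrow> 'a set \<Rightarrow> ('a \<Rightarrow> 'a) set"
    and FE :: "'v \<times> 'v \<Rightarrow> 'a set \<Rightarrow> 'a set \<Rightarrow> ('a \<Rightarrow> 'a) set"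
    and vs :: 'v and P :: "'a set"
  assumes grp: "group G"
    and tree: "fin_tree V E"
    and vs: "vs \<in> V"
    and FVfs: "\<forall>v\<in>V. fusion_system G p (SV v) (FV v)"
    and FEfs: "\<forall>e\<in>E. fusion_system G p (SE e) (FE e)"
    and incl: "\<forall>v w. (v,w) \<in> E \<longrightarrow> SE (v,w) \<subseteq> SV v \<and> SE (v,w) \<subseteq> SV w \<and>
                 (\<forall>Q R. FE (v,w) Q R \<subseteq> FV v Q R \<and> FE (v,w) Q R \<subseteq> FV w Q R)"
    and H: "hyp_H V E SV SE vs"
    and P: "subgroup P G" "P \<subseteq> SV vs"
  defines "FT \<equiv> completion G p (SV vs) V SV FV"
    and "RV \<equiv> orbit_vertices G V SV FV P"
    and "RE \<equiv> orbit_edges G E SE FE P"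
    and "conn \<equiv> orbit_conn G E SV SE FV FE P"
    and "x0 \<equiv> (vs, rep_cls G (FV vs) P (SV vs) (restrict id P))"
  shows
    "conn `` {x0} = {(v,c). v \<in> V \<and> c \<in> Rep_in G FT (FV v) P (SV v)}
     \<and> {\<epsilon> \<in> RE. \<exists>x \<in> conn `` {x0}. orbit_incident G SV FV P x \<epsilon>}
         = {(e,c). e \<in> E \<and> c \<in> Rep_in G FT (FE e) P (SE e)}
     \<and> (\<exists>\<Phi>. (\<forall>v\<in>V. \<forall>\<alpha>\<in>sub_hom G P (SV v).
              \<Phi> (conn `` {(v, rep_cls G (FV v) P (SV v) \<alpha>)}) = rep_cls G FT P (SV vs) \<alpha>)
            \<and> bij_betw \<Phi> (RV // conn) (Rep G FT P (SV vs)))"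
proof -
  interpret T: tree_fs G p V E SV SE FV FE vs P
  proof (rule tree_fs.intro[OF grp])
    show "tree_fs_axioms G p V E SV SE FV FE vs P"
      unfolding tree_fs_axioms_def using tree vs FVfs FEfs incl H P by (intro conjI) assumption+
  qed
  have a1: "conn `` {x0} = {(v,c). v \<in> V \<and> c \<in> Rep_in G FT (FV v) P (SV v)}"
    unfolding conn_def x0_def FT_def by (rule T.part_a1)
  have a2: "{\<epsilon> \<in> RE. \<exists>x \<in> conn `` {x0}. orbit_incident G SV FV P x \<epsilon>}
         = {(e,c). e \<in> E \<and> c \<in> Rep_in G FT (FE e) P (SE e)}"
    unfolding RE_def conn_def x0_def FT_def by (rule T.part_a2)
  have b1: "\<forall>v\<in>V. \<forall>\<alpha>\<in>sub_hom G P (SV v).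
              T.Phi (conn `` {(v, rep_cls G (FV v) P (SV v) \<alpha>)}) = rep_cls G FT P (SV vs) \<alpha>"
    unfolding conn_def FT_def using T.Phi_eq by blast
  have b2: "bij_betw T.Phi (RV // conn) (Rep G FT P (SV vs))"
    unfolding RV_def conn_def FT_def by (rule T.part_b)
  show ?thesis using a1 a2 b1 b2 by blast
qed

end
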